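(* There exists a stably correct CRN protocol $\Pi=(\mathcal{S},\mathcal{R})$ such that $\operatorname{RT}_{\mathrm{stab}}^{\Pi}(n)=O(\log n)$, but if the minimum in the definition of $\operatorname{RT}_{\mathrm{stab}}^{\Pi}(n)$ is restricted to runtime policies $\varrho$ with $|\varrho(\mathbf{c})|\le1$ for every configuration $\mathbf{c}$, then the resulting quantity is $\Omega(n)$.
   Context: CRN model: $\Pi=(\mathcal{S},\mathcal{R})$, finite species set, finite reaction set $\mathcal{R}\subset\mathbb{N}^{\mathcal{S}}\times\mathbb{N}^{\mathcal{S}}$; reactions $(\mathbf{r},\mathbf{p})$ with $\|\mathbf{r}\|_1\in\{1,2\}$, $\|\mathbf{r}\|_1\le\|\mathbf{p}\|_1$; every $\mathbf{r}$ with $1\le\|\mathbf{r}\|_1\le2$ has a nonempty set $\mathcal{R}(\mathbf{r})$ of reactions; void reactions ($\mathbf{r}=\mathbf{p}$) alone in their $\mathcal{R}(\mathbf{r})$; $\operatorname{NV}(\mathcal{R})$ non-void; finite density. Configurations $\mathbf{c}\in\mathbb{N}^{\mathcal{S}}$, $\|\mathbf{c}\|_1\ge1$; applicability $\mathbf{r}\le\mathbf{c}$, result $\mathbf{c}-\mathbf{r}+\mathbf{p}$; reachability $\stackrel{*}{\rightharpoonup}$; $\mathrm{stab}(Z)=\{\mathbf{c}\in Z:\mathbf{c}\stackrel{*}{\rightharpoonup}\mathbf{c}'\Rightarrow\mathbf{c}'\in Z\}$. Weakly fair executions $\langle\mathbf{c}^t,\alpha^t\rangle$: every reaction applicable at step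 $t$ is later scheduled or becomes inapplicable. Correctness is w.r.t. an interface $\mathcal{I}=(\mathcal{U},\mu,\mathcal{C})$ giving target sets $Z_{\mathcal{I}}(\mathbf{c}^0)=\{\mathbf{c}:(\mu(\mathbf{c}^0),\mu(\mathbf{c}))\in\mathcal{C}\}$ ($\mu(\mathbf{c})(u)=\sum_{\mu(A)=u}\mathbf{c}(A)$) and valid initial configurations (those with $Z_{\mathcal{I}}(\mathbf{c}^0)\ne\emptyset$); stably correct: every weakly fair valid execution reaches $\mathrm{stab}(Z_{\mathcal{I}}(\mathbf{c}^0))$, the first such step being the stabilization step. Runtime: stochastic scheduler with volume $\varphi=\Theta(n)$, $n=\|\mathbf{c}^0\|_1$; propensity $\pi_{\mathbf{c}}(\alpha)=\mathbf{c}(A)/|\mathcal{R}(\mathbf{r})|$ ($\mathbf{r}=A$), $\frac1\varphi\binom{\mathbf{c}(A)}2/|\mathcal{R}(\mathbf{r})|$ ($\mathbf{r}=2A$), $\frac1\varphi\mathbf{c}(A)\mathbf{c}(B)/|\mathcal{R}(\mathbf{r})|$ ($\mathbf{r}=A+B$); step time span $1/\pi_{\mathbf{c}}(\mathcal{R})$. $\tau(\eta,t,Q)$ = least $s>t$ with $\alpha^{s-1}\in Q$ or every reaction of $Q$ inapplicable at some step in $[t,s]$. Runtime policy $\varrho(\mathbf{c})\subseteq\operatorname{NV}(\mathcal{R})$; skipping policy $\sigma(t)\ge t$; rounds $t(0)=0$, $t_e(i)=\sigma(t(i))$, $\mathbf{e}^i=\mathbf{c}^{t_e(i)}$, $t(i+1)=\tau(\eta,t_e(i),\varrho(\mathbf{e}^i))$;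 $\operatorname{TC}^{\varrho}(\mathbf{c})$ = expected total time span of the steps before $\tau(\eta_r,0,\varrho(\mathbf{c}))$ of a stochastic execution from $\mathbf{c}$; $\operatorname{RT}_{\mathrm{stab}}^{\varrho,\sigma}(\eta)=\sum_{i<i^*}\operatorname{TC}^{\varrho}(\mathbf{e}^i)$, $i^*=\min\{i:t(i)\ge t^*\}$, $t^*$ the stabilization step; $\operatorname{RT}_{\mathrm{stab}}^{\Pi}(n)=\min_\varrho\max_{\eta,\sigma}\operatorname{RT}_{\mathrm{stab}}^{\varrho,\sigma}(\eta)$, max over weakly fair valid executions with initial molecular count $n$ and all skipping policies. *)

theory Defs
  imports Complex_Main "HOL-Library.Landau_Symbols" "HOL-Library.Extended_Nonnegative_Real"
begin

(* Species are natural numbers; a CRN has a finite species set S \<subseteq> nat.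
   Vectors in N^S are functions nat \<Rightarrow> nat vanishing outside S. *)
type_synonym conf = "nat \<Rightarrow> nat"
type_synonym reaction = "conf \<times> conf"

definition supp_in :: "nat set \<Rightarrow> conf \<Rightarrow> bool" where
  "supp_in S c \<longleftrightarrow> (\<forall>A. A \<notin> S \<longrightarrow> c A = 0)"

definition size1 :: "nat set \<Rightarrow> conf \<Rightarrow> nat" where
  "size1 S c = (\<Sum>A\<in>S. c A)"

definition is_config :: "nat set \<Rightarrow> conf \<Rightarrow> bool" where
  "is_config S c \<longleftrightarrow> supp_in S c \<and> 1 \<le> size1 S c"

definition Rof :: "reaction set \<Rightarrow> conf \<Rightarrow> reaction set" where
  "Rof R r = {\<alpha>\<in>R. fst \<alpha> = r}"

definition NV :: "reaction set \<Rightarrow> reaction set" where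
  "NV R = {\<alpha>\<in>R. fst \<alpha> \<noteq> snd \<alpha>}"

definition applicable :: "conf \<Rightarrow> reaction \<Rightarrow> bool" where
  "applicable c \<alpha> \<longleftrightarrow> (\<forall>A. fst \<alpha> A \<le> c A)"

definition apply_rx :: "conf \<Rightarrow> reaction \<Rightarrow> conf" where
  "apply_rx c \<alpha> = (\<lambda>A. c A - fst \<alpha> A + snd \<alpha> A)"

definition step :: "reaction set \<Rightarrow> conf \<Rightarrow> conf \<Rightarrow> bool" where
  "step R c c' \<longleftrightarrow> (\<exists>\<alpha>\<in>R. applicable c \<alpha> \<and> c' = apply_rx c \<alpha>)"

definition reach :: "reaction set \<Rightarrow> conf \<Rightarrow> conf \<Rightarrow> bool" where
  "reach R = (step R)\<^sup>*\<^sup>*"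

definition stab :: "reaction set \<Rightarrow> conf set \<Rightarrow> conf set" where
  "stab R Z = {c\<in>Z. \<forall>c'. reach R c c' \<longrightarrow> c' \<in> Z}"

definition crn :: "nat set \<Rightarrow> reaction set \<Rightarrow> bool" where
  "crn S R \<longleftrightarrow> finite S \<and> finite R \<and>
     (\<forall>(r,p)\<in>R. supp_in S r \<and> supp_in S p \<and> size1 S r \<in> {1,2} \<and> size1 S r \<le> size1 S p) \<and>
     (\<forall>r. supp_in S r \<and> 1 \<le> size1 S r \<and> size1 S r \<le> 2 \<longrightarrow> Rof R r \<noteq> {}) \<and>
     (\<forall>(r,p)\<in>R. r = p \<longrightarrow> Rof R r = {(r,p)})"

definition mu_conf :: "nat set \<Rightarrow> (nat \<Rightarrow> nat) \<Rightarrow> conf \<Rightarrow> (nat \<Rightarrow> nat)" where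
  "mu_conf S \<mu> c = (\<lambda>u. \<Sum>A\<in>{A\<in>S. \<mu> A = u}. c A)"

definition interface :: "nat set \<Rightarrow> nat set \<Rightarrow> (nat \<Rightarrow> nat) \<Rightarrow> ((nat \<Rightarrow> nat) \<times> (nat \<Rightarrow> nat)) set \<Rightarrow> bool" where
  "interface S U \<mu> C \<longleftrightarrow> (\<forall>A\<in>S. \<mu> A \<in> U) \<and> C \<subseteq> {(x,y). supp_in U x \<and> supp_in U y}"

definition Zset :: "nat set \<Rightarrow> (nat \<Rightarrow> nat) \<Rightarrow> ((nat \<Rightarrow> nat) \<times> (nat \<Rightarrow> nat)) set \<Rightarrow> conf \<Rightarrow> conf set" where
  "Zset S \<mu> C c0 = {c. is_config S c \<and> (mu_conf S \<mu> c0, mu_conf S \<mu> c) \<in> C}"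

definition valid_init :: "nat set \<Rightarrow> (nat \<Rightarrow> nat) \<Rightarrow> ((nat \<Rightarrow> nat) \<times> (nat \<Rightarrow> nat)) set \<Rightarrow> conf \<Rightarrow> bool" where
  "valid_init S \<mu> C c0 \<longleftrightarrow> is_config S c0 \<and> Zset S \<mu> C c0 \<noteq> {}"

definition execution :: "nat set \<Rightarrow> reaction set \<Rightarrow> (nat \<Rightarrow> conf) \<Rightarrow> (nat \<Rightarrow> reaction) \<Rightarrow> bool" where
  "execution S R cs as \<longleftrightarrow> is_config S (cs 0) \<and>
     (\<forall>t. as t \<in> R \<and> applicable (cs t) (as t) \<and> cs (Suc t) = apply_rx (cs t) (as t))"

definition weakly_fair :: "reaction set \<Rightarrow> (nat \<Rightarrow> conf) \<Rightarrow> (nat \<Rightarrow> reaction) \<Rightarrow> bool" where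
  "weakly_fair R cs as \<longleftrightarrow>
     (\<forall>t. \<forall>\<alpha>\<in>R. applicable (cs t) \<alpha> \<longrightarrow> (\<exists>s\<ge>t. as s = \<alpha> \<or> \<not> applicable (cs s) \<alpha>))"

definition valid_fair_exec :: "nat set \<Rightarrow> reaction set \<Rightarrow> (nat \<Rightarrow> nat) \<Rightarrow> ((nat \<Rightarrow> nat) \<times> (nat \<Rightarrow> nat)) set
     \<Rightarrow> (nat \<Rightarrow> conf) \<Rightarrow> (nat \<Rightarrow> reaction) \<Rightarrow> bool" where
  "valid_fair_exec S R \<mu> C cs as \<longleftrightarrow>
     execution S R cs as \<and> weakly_fair R cs as \<and> valid_init S \<mu> C (cs 0)"

definition stably_correct :: "nat set \<Rightarrow> reaction set \<Rightarrow> (nat \<Rightarrow> nat) \<Rightarrow> ((nat \<Rightarrow> nat) \<times> (nat \<Rightarrow> nat)) set \<Rightarrow> bool" where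
  "stably_correct S R \<mu> C \<longleftrightarrow>
     (\<forall>cs as. valid_fair_exec S R \<mu> C cs as \<longrightarrow> (\<exists>t. cs t \<in> stab R (Zset S \<mu> C (cs 0))))"

definition stab_step :: "nat set \<Rightarrow> reaction set \<Rightarrow> (nat \<Rightarrow> nat) \<Rightarrow> ((nat \<Rightarrow> nat) \<times> (nat \<Rightarrow> nat)) set
     \<Rightarrow> (nat \<Rightarrow> conf) \<Rightarrow> nat" where
  "stab_step S R \<mu> C cs = (LEAST t. cs t \<in> stab R (Zset S \<mu> C (cs 0)))"

definition finite_density :: "nat set \<Rightarrow> reaction set \<Rightarrow> (nat \<Rightarrow> nat) \<Rightarrow> ((nat \<Rightarrow> nat) \<times> (nat \<Rightarrow> nat)) set \<Rightarrow> bool" where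
  "finite_density S R \<mu> C \<longleftrightarrow>
     (\<exists>\<kappa>::real. \<forall>c0 c. valid_init S \<mu> C c0 \<and> reach R c0 c \<longrightarrow> real (size1 S c) \<le> \<kappa> * real (size1 S c0))"

definition crn_protocol :: "nat set \<Rightarrow> reaction set \<Rightarrow> nat set \<Rightarrow> (nat \<Rightarrow> nat) \<Rightarrow> ((nat \<Rightarrow> nat) \<times> (nat \<Rightarrow> nat)) set \<Rightarrow> bool" where
  "crn_protocol S R U \<mu> C \<longleftrightarrow> crn S R \<and> interface S U \<mu> C \<and> finite_density S R \<mu> C"

(* Propensity with volume vol.  Since ||r||_1 \<in> {1,2}, the product equals
   c(A) for r = A, binom(c(A),2) for r = 2A, and c(A)c(B) for r = A+B. *)
definition propensity :: "nat set \<Rightarrow> reaction set \<Rightarrow> real \<Rightarrow> conf \<Rightarrow> reaction \<Rightarrow> real" where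
  "propensity S R vol c \<alpha> =
     (\<Prod>A\<in>S. real (c A choose fst \<alpha> A)) * (if size1 S (fst \<alpha>) = 1 then 1 else 1 / vol)
       / real (card (Rof R (fst \<alpha>)))"

definition total_prop :: "nat set \<Rightarrow> reaction set \<Rightarrow> real \<Rightarrow> conf \<Rightarrow> real" where
  "total_prop S R vol c = (\<Sum>\<alpha>\<in>R. propensity S R vol c \<alpha>)"

definition span :: "nat set \<Rightarrow> reaction set \<Rightarrow> real \<Rightarrow> conf \<Rightarrow> real" where
  "span S R vol c = 1 / total_prop S R vol c"

(* Expected total time span of the first min(k, tau(eta_r,0,Q)) steps of a stochastic
   execution from c (the jump chain picks alpha with probability pi_c(alpha)/pi_c(R)). *)
primrec tc_trunc :: "nat set \<Rightarrow> reaction set \<Rightarrow> real \<Rightarrow> reaction set \<Rightarrow> nat \<Rightarrow> conf \<Rightarrow> ennreal" where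
  "tc_trunc S R vol Q 0 c = 0"
| "tc_trunc S R vol Q (Suc k) c =
     ennreal (span S R vol c) +
     (if \<exists>\<alpha>\<in>Q. applicable c \<alpha> then
        (\<Sum>\<alpha>\<in>R. ennreal (propensity S R vol c \<alpha> / total_prop S R vol c) *
           (if \<alpha> \<in> Q \<or> \<not> (\<exists>\<beta>\<in>Q. applicable (apply_rx c \<alpha>) \<beta>) then 0
            else tc_trunc S R vol Q k (apply_rx c \<alpha>)))
      else 0)"

definition TC :: "nat set \<Rightarrow> reaction set \<Rightarrow> real \<Rightarrow> reaction set \<Rightarrow> conf \<Rightarrow> ennreal" where
  "TC S R vol Q c = (SUP k. tc_trunc S R vol Q k c)"

definition tau :: "(nat \<Rightarrow> conf) \<Rightarrow> (nat \<Rightarrow> reaction) \<Rightarrow> nat \<Rightarrow> reaction set \<Rightarrow> nat" where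
  "tau cs as t Q = (LEAST s. t < s \<and>
      (as (s - 1) \<in> Q \<or> (\<exists>u. t \<le> u \<and> u \<le> s \<and> (\<forall>\<alpha>\<in>Q. \<not> applicable (cs u) \<alpha>))))"

(* round start steps t(i); t_e(i) = sigma (t(i)) *)
primrec rnd :: "(conf \<Rightarrow> reaction set) \<Rightarrow> (nat \<Rightarrow> nat) \<Rightarrow> (nat \<Rightarrow> conf) \<Rightarrow> (nat \<Rightarrow> reaction) \<Rightarrow> nat \<Rightarrow> nat" where
  "rnd \<rho> \<sigma> cs as 0 = 0"
| "rnd \<rho> \<sigma> cs as (Suc i) = tau cs as (\<sigma> (rnd \<rho> \<sigma> cs as i)) (\<rho> (cs (\<sigma> (rnd \<rho> \<sigma> cs as i))))"

definition RT_exec :: "nat set \<Rightarrow> reaction set \<Rightarrow> (nat \<Rightarrow> nat) \<Rightarrow> ((nat \<Rightarrow> nat) \<times> (nat \<Rightarrow> nat)) set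
     \<Rightarrow> real \<Rightarrow> (conf \<Rightarrow> reaction set) \<Rightarrow> (nat \<Rightarrow> nat) \<Rightarrow> (nat \<Rightarrow> conf) \<Rightarrow> (nat \<Rightarrow> reaction) \<Rightarrow> ennreal" where
  "RT_exec S R \<mu> C vol \<rho> \<sigma> cs as =
     (let istar = (LEAST i. stab_step S R \<mu> C cs \<le> rnd \<rho> \<sigma> cs as i) in
      \<Sum>i<istar. TC S R vol (\<rho> (cs (\<sigma> (rnd \<rho> \<sigma> cs as i)))) (cs (\<sigma> (rnd \<rho> \<sigma> cs as i))))"

definition runtime_policy :: "reaction set \<Rightarrow> (conf \<Rightarrow> reaction set) \<Rightarrow> bool" where
  "runtime_policy R \<rho> \<longleftrightarrow> (\<forall>c. \<rho> c \<subseteq> NV R)"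

definition skipping_policy :: "(nat \<Rightarrow> nat) \<Rightarrow> bool" where
  "skipping_policy \<sigma> \<longleftrightarrow> (\<forall>t. t \<le> \<sigma> t)"

(* RT_stab^Pi(n), with the min restricted to policies satisfying P; volume phi n *)
definition RT_stab :: "nat set \<Rightarrow> reaction set \<Rightarrow> (nat \<Rightarrow> nat) \<Rightarrow> ((nat \<Rightarrow> nat) \<times> (nat \<Rightarrow> nat)) set
     \<Rightarrow> (nat \<Rightarrow> real) \<Rightarrow> ((conf \<Rightarrow> reaction set) \<Rightarrow> bool) \<Rightarrow> nat \<Rightarrow> ennreal" where
  "RT_stab S R \<mu> C \<phi> P n =
     (INF \<rho>\<in>{\<rho>. runtime_policy R \<rho> \<and> P \<rho>}.
        SUP x\<in>{(cs, as, \<sigma>). valid_fair_exec S R \<mu> C cs as \<and> size1 S (cs 0) = n \<and> skipping_policy \<sigma>}.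
          (case x of (cs, as, \<sigma>) \<Rightarrow> RT_exec S R \<mu> C (\<phi> n) \<rho> \<sigma> cs as))"

end

theory Submission
  imports Defs
begin



definition S0 :: "nat set" where "S0 = {4,5,6,7}"
definition ev :: "nat \<Rightarrow> conf" where "ev i = (\<lambda>A. if A = i then 1 else 0)"
definition ev2 :: "nat \<Rightarrow> nat \<Rightarrow> conf" where "ev2 i j = (\<lambda>A. ev i A + ev j A)"
definition t12 :: reaction where "t12 = (ev 4, ev 5)"
definition eps :: reaction where "eps = (ev 4, ev 7)"
definition t21 :: reaction where "t21 = (ev 5, ev 4)"
definition dl :: reaction where "dl = (ev2 6 6, ev2 6 7)"
definition reactants :: "conf set" where
  "reactants = {r. supp_in S0 r \<and> 1 \<le> size1 S0 r \<and> size1 S0 r \<le> 2}"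
definition R0 :: "reaction set" where
  "R0 = {t12, eps, t21, dl} \<union> (\<lambda>r. (r,r)) ` (reactants - {ev 4, ev 5, ev2 6 6})"
definition C0 :: "((nat \<Rightarrow> nat) \<times> (nat \<Rightarrow> nat)) set" where
  "C0 = {(x,y). supp_in S0 x \<and> supp_in S0 y \<and> x 4 = 1 \<and> x 5 = 0 \<and> x 6 = 2 \<and> x 7 < y 7}"

lemma S0_mem[simp]: "4 \<in> S0" "5 \<in> S0" "6 \<in> S0" "7 \<in> S0" by (auto simp: S0_def)

lemma size1_S0: "size1 S0 c = c 4 + c 5 + c 6 + c 7"
  by (simp add: size1_def S0_def)

lemma prod_S0: "(\<Prod>A\<in>S0. f A) = f 4 * f 5 * f 6 * f 7"
  by (simp add: S0_def mult.assoc)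

lemma ev_simps[simp]: "ev i i = 1" "j \<noteq> i \<Longrightarrow> ev i j = 0"
  by (auto simp: ev_def)

lemma ev_ne: "i \<noteq> j \<Longrightarrow> ev i \<noteq> ev j"
  by (metis ev_simps zero_neq_one)

lemma ev2_ne: "ev2 6 6 \<noteq> ev i" "ev i \<noteq> ev2 6 6" "ev2 6 6 \<noteq> ev2 6 7"
proof -
  have "ev2 6 6 6 = 2" by (simp add: ev2_def)
  moreover have "ev i 6 \<le> 1" by (simp add: ev_def)
  ultimately show "ev2 6 6 \<noteq> ev i" by (metis numeral_le_one_iff semiring_norm(69))
  then show "ev i \<noteq> ev2 6 6" by metis
  have "ev2 6 6 6 = 2" "ev2 6 7 6 = 1" by (auto simp: ev2_def)
  then show "ev2 6 6 \<noteq> ev2 6 7" by auto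
qed

lemma size_evs[simp]: "size1 S0 (ev 4) = 1" "size1 S0 (ev 5) = 1" "size1 S0 (ev 7) = 1"
  "supp_in S0 (ev 4)" "supp_in S0 (ev 5)" "supp_in S0 (ev 7)"
  "size1 S0 (ev2 6 6) = 2" "size1 S0 (ev2 6 7) = 2"
  "supp_in S0 (ev2 6 6)" "supp_in S0 (ev2 6 7)"
  unfolding size1_S0 by (auto simp: supp_in_def ev_def ev2_def S0_def)

lemma reactants_finite: "finite reactants"
proof -
  have "reactants \<subseteq> {f. \<forall>x. (x \<in> S0 \<longrightarrow> f x \<in> {0..2}) \<and> (x \<notin> S0 \<longrightarrow> f x = 0)}"
  proof
    fix f assume "f \<in> reactants"
    then have h: "supp_in S0 f" "size1 S0 f \<le> 2" by (auto simp: reactants_def)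
    have "\<And>x. x \<in> S0 \<Longrightarrow> f x \<le> size1 S0 f"
      unfolding size1_def by (rule member_le_sum) (auto simp: S0_def)
    then show "f \<in> {f. \<forall>x. (x \<in> S0 \<longrightarrow> f x \<in> {0..2}) \<and> (x \<notin> S0 \<longrightarrow> f x = 0)}"
      using h by (force simp: supp_in_def)
  qed
  moreover have "finite {f. \<forall>x. (x \<in> S0 \<longrightarrow> f x \<in> {0..(2::nat)}) \<and> (x \<notin> S0 \<longrightarrow> f x = 0)}"
    by (rule finite_set_of_finite_funs) (auto simp: S0_def)
  ultimately show ?thesis by (rule finite_subset)
qed

lemma R0_finite: "finite R0"
  unfolding R0_def using reactants_finite by auto

lemma NV_R0: "NV R0 = {t12, eps, t21, dl}"
  unfolding NV_def R0_def t12_def eps_def t21_def dl_def using ev_ne ev2_ne by auto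

lemma R0_cases: "\<alpha> \<in> R0 \<Longrightarrow> \<alpha> \<in> {t12, eps, t21, dl} \<or> (fst \<alpha> = snd \<alpha> \<and> fst \<alpha> \<in> reactants - {ev 4, ev 5, ev2 6 6})"
  unfolding R0_def by auto

lemma Rof_e0: "Rof R0 (ev 4) = {t12, eps}"
  unfolding Rof_def R0_def t12_def eps_def t21_def dl_def using ev_ne ev2_ne by auto
lemma Rof_e1: "Rof R0 (ev 5) = {t21}"
  unfolding Rof_def R0_def t12_def eps_def t21_def dl_def using ev_ne ev2_ne by auto
lemma Rof_dl: "Rof R0 (ev2 6 6) = {dl}"
  unfolding Rof_def R0_def t12_def eps_def t21_def dl_def using ev_ne ev2_ne by auto
lemma Rof_void: "r \<in> reactants - {ev 4, ev 5, ev2 6 6} \<Longrightarrow> Rof R0 r = {(r,r)}"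
  unfolding Rof_def R0_def t12_def eps_def t21_def dl_def using ev_ne ev2_ne by auto

lemma t12_ne_eps: "t12 \<noteq> eps" using ev_ne[of 5 7] by (simp add: t12_def eps_def)

definition good_rx :: "reaction \<Rightarrow> bool" where
  "good_rx \<alpha> \<longleftrightarrow> supp_in S0 (fst \<alpha>) \<and> supp_in S0 (snd \<alpha>) \<and> size1 S0 (fst \<alpha>) = size1 S0 (snd \<alpha>)
    \<and> size1 S0 (fst \<alpha>) \<in> {1,2} \<and> fst \<alpha> 7 \<le> snd \<alpha> 7 \<and> (\<alpha> \<noteq> dl \<longrightarrow> fst \<alpha> 6 = snd \<alpha> 6) \<and>
     card (Rof R0 (fst \<alpha>)) \<ge> 1"

lemma good_t12: "good_rx t12"
proof -
  have "t12 \<noteq> dl" using ev2_ne by (simp add: t12_def dl_def)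
  moreover have "card (Rof R0 (fst t12)) \<ge> 1" by (simp add: t12_def Rof_e0 card_insert_if)
  ultimately show ?thesis unfolding good_rx_def by (simp add: t12_def)
qed
lemma good_eps: "good_rx eps"
proof -
  have "eps \<noteq> dl" using ev2_ne by (simp add: eps_def dl_def)
  moreover have "card (Rof R0 (fst eps)) \<ge> 1" by (simp add: eps_def Rof_e0 card_insert_if)
  ultimately show ?thesis unfolding good_rx_def by (simp add: eps_def)
qed
lemma good_t21: "good_rx t21"
proof -
  have "t21 \<noteq> dl" using ev2_ne by (simp add: t21_def dl_def)
  moreover have "card (Rof R0 (fst t21)) \<ge> 1" by (simp add: t21_def Rof_e1)
  ultimately show ?thesis unfolding good_rx_def by (simp add: t21_def)
qed
lemma good_dl: "good_rx dl"
proof -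
  have "card (Rof R0 (fst dl)) \<ge> 1" by (simp add: dl_def Rof_dl)
  moreover have "ev2 6 6 7 \<le> ev2 6 7 7" by (simp add: ev2_def)
  ultimately show ?thesis unfolding good_rx_def by (simp add: dl_def)
qed
lemma good_void: assumes "r \<in> reactants - {ev 4, ev 5, ev2 6 6}" shows "good_rx (r, r)"
proof -
  have h: "1 \<le> size1 S0 r" "size1 S0 r \<le> 2" "supp_in S0 r" using assms by (auto simp: reactants_def)
  then have "size1 S0 r = 1 \<or> size1 S0 r = 2" by presburger
  then show ?thesis unfolding good_rx_def using Rof_void[OF assms] h by auto
qed

lemma R0_props:
  assumes "\<alpha> \<in> R0"
  shows "supp_in S0 (fst \<alpha>)" "supp_in S0 (snd \<alpha>)" "size1 S0 (fst \<alpha>) = size1 S0 (snd \<alpha>)"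
    "size1 S0 (fst \<alpha>) \<in> {1,2}" "fst \<alpha> 7 \<le> snd \<alpha> 7" "\<alpha> \<noteq> dl \<Longrightarrow> fst \<alpha> 6 = snd \<alpha> 6"
    "card (Rof R0 (fst \<alpha>)) \<ge> 1"
proof -
  have "good_rx \<alpha>" using assms good_t12 good_eps good_t21 good_dl good_void unfolding R0_def by blast
  then show "supp_in S0 (fst \<alpha>)" "supp_in S0 (snd \<alpha>)" "size1 S0 (fst \<alpha>) = size1 S0 (snd \<alpha>)"
    "size1 S0 (fst \<alpha>) \<in> {1,2}" "fst \<alpha> 7 \<le> snd \<alpha> 7" "\<alpha> \<noteq> dl \<Longrightarrow> fst \<alpha> 6 = snd \<alpha> 6"
    "card (Rof R0 (fst \<alpha>)) \<ge> 1" unfolding good_rx_def by auto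
qed

lemma size_apply:
  assumes "applicable c \<alpha>"
  shows "size1 S (apply_rx c \<alpha>) + size1 S (fst \<alpha>) = size1 S c + size1 S (snd \<alpha>)"
proof -
  have "apply_rx c \<alpha> A + fst \<alpha> A = c A + snd \<alpha> A" for A
  proof -
    have "fst \<alpha> A \<le> c A" using assms by (simp add: applicable_def)
    then show ?thesis by (simp add: apply_rx_def)
  qed
  then show ?thesis unfolding size1_def sum.distrib[symmetric] by simp
qed

lemma R0_apply:
  assumes "\<alpha> \<in> R0" "applicable c \<alpha>" "supp_in S0 c"
  shows "supp_in S0 (apply_rx c \<alpha>)" "size1 S0 (apply_rx c \<alpha>) = size1 S0 c"
    "apply_rx c \<alpha> 7 \<ge> c 7" "\<alpha> \<noteq> dl \<Longrightarrow> apply_rx c \<alpha> 6 = c 6"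
  using R0_props[OF assms(1)] size_apply[OF assms(2), of S0] assms(2,3)
  by (auto simp: apply_rx_def supp_in_def applicable_def)

lemma prop_nonneg: "0 < vol \<Longrightarrow> 0 \<le> propensity S R vol c \<alpha>"
  by (simp add: propensity_def prod_nonneg)

lemma total_nonneg: "0 < vol \<Longrightarrow> 0 \<le> total_prop S R vol c"
  by (simp add: total_prop_def prop_nonneg sum_nonneg)

lemma prop_applicable:
  assumes "\<alpha> \<in> R0" "propensity S0 R0 vol c \<alpha> \<noteq> 0"
  shows "applicable c \<alpha>"
proof -
  have "(\<Prod>A\<in>S0. real (c A choose fst \<alpha> A)) \<noteq> 0" using assms(2) by (auto simp: propensity_def)
  then have "\<forall>A\<in>S0. fst \<alpha> A \<le> c A" by (auto simp: S0_def binomial_eq_0_iff)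
  moreover have "\<forall>A. A \<notin> S0 \<longrightarrow> fst \<alpha> A = 0" using R0_props(1)[OF assms(1)] by (auto simp: supp_in_def)
  ultimately show ?thesis unfolding applicable_def by (metis le0)
qed

lemma void_apply: "applicable c (r, r) \<Longrightarrow> apply_rx c (r, r) = c"
  by (auto simp: apply_rx_def applicable_def fun_eq_iff)

lemma prop_t12: "propensity S0 R0 vol c t12 = real (c 4) / 2"
  using t12_ne_eps by (simp add: propensity_def prod_S0 t12_def Rof_e0)
lemma prop_eps: "propensity S0 R0 vol c eps = real (c 4) / 2"
  using t12_ne_eps by (simp add: propensity_def prod_S0 eps_def Rof_e0)
lemma prop_t21: "propensity S0 R0 vol c t21 = real (c 5)"
  by (simp add: propensity_def prod_S0 t21_def Rof_e1)
lemma prop_dl: "propensity S0 R0 vol c dl = real (c 6 choose 2) / vol"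
proof -
  have "ev2 6 6 4 = 0" "ev2 6 6 5 = 0" "ev2 6 6 6 = 2" "ev2 6 6 7 = 0" by (simp_all add: ev2_def)
  then show ?thesis by (simp add: propensity_def prod_S0 dl_def Rof_dl)
qed




lemma tc_ub:
  fixes f :: "conf \<Rightarrow> real"
  assumes fin: "finite R" and vol: "0 < vol"
    and pos: "\<And>c. c \<in> W \<Longrightarrow> 0 < total_prop S R vol c"
    and key: "\<And>c. c \<in> W \<Longrightarrow> \<exists>w. (\<forall>\<alpha>\<in>R. 0 \<le> w \<alpha> \<and> (propensity S R vol c \<alpha> \<noteq> 0 \<longrightarrow> \<alpha> \<notin> Q \<longrightarrow>
        (\<exists>\<beta>\<in>Q. applicable (apply_rx c \<alpha>) \<beta>) \<longrightarrow> apply_rx c \<alpha> \<in> W \<and> f (apply_rx c \<alpha>) \<le> w \<alpha>)) \<and>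
        1 + (\<Sum>\<alpha>\<in>R. propensity S R vol c \<alpha> * w \<alpha>) \<le> f c * total_prop S R vol c"
  shows "c \<in> W \<Longrightarrow> tc_trunc S R vol Q k c \<le> ennreal (f c)"
proof (induction k arbitrary: c)
  case 0
  then show ?case by simp
next
  case (Suc k)
  define P where "P = total_prop S R vol c"
  define p where "p = propensity S R vol c"
  obtain w where w: "\<forall>\<alpha>\<in>R. 0 \<le> w \<alpha> \<and> (p \<alpha> \<noteq> 0 \<longrightarrow> \<alpha> \<notin> Q \<longrightarrow>
        (\<exists>\<beta>\<in>Q. applicable (apply_rx c \<alpha>) \<beta>) \<longrightarrow> apply_rx c \<alpha> \<in> W \<and> f (apply_rx c \<alpha>) \<le> w \<alpha>)"
      "1 + (\<Sum>\<alpha>\<in>R. p \<alpha> * w \<alpha>) \<le> f c * P"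
    using key[OF Suc.prems] unfolding p_def P_def by blast
  have P: "0 < P" using pos Suc.prems by (simp add: P_def)
  have pnn: "0 \<le> p \<alpha>" for \<alpha> using vol by (simp add: p_def propensity_def prod_nonneg)
  define X where "X \<alpha> = (if \<alpha> \<in> Q \<or> \<not> (\<exists>\<beta>\<in>Q. applicable (apply_rx c \<alpha>) \<beta>) then 0
      else tc_trunc S R vol Q k (apply_rx c \<alpha>))" for \<alpha>
  have trm: "ennreal (p \<alpha> / P) * X \<alpha> \<le> ennreal (p \<alpha> / P * w \<alpha>)" if "\<alpha> \<in> R" for \<alpha>
  proof (cases "p \<alpha> = 0 \<or> \<alpha> \<in> Q \<or> \<not> (\<exists>\<beta>\<in>Q. applicable (apply_rx c \<alpha>) \<beta>)")
    case True
    then show ?thesis by (auto simp: X_def)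
  next
    case False
    then have h: "apply_rx c \<alpha> \<in> W" "f (apply_rx c \<alpha>) \<le> w \<alpha>" using w(1) that by auto
    have "X \<alpha> = tc_trunc S R vol Q k (apply_rx c \<alpha>)" using False by (simp add: X_def)
    also have "\<dots> \<le> ennreal (f (apply_rx c \<alpha>))" using Suc.IH[OF h(1)] .
    also have "\<dots> \<le> ennreal (w \<alpha>)" using h(2) by (simp add: ennreal_leI)
    finally have "ennreal (p \<alpha> / P) * X \<alpha> \<le> ennreal (p \<alpha> / P) * ennreal (w \<alpha>)"
      by (simp add: mult_left_mono)
    also have "\<dots> = ennreal (p \<alpha> / P * w \<alpha>)"
      using pnn[of \<alpha>] P w(1) that by (intro ennreal_mult[symmetric]) auto
    finally show ?thesis .
  qed
  have "(\<Sum>\<alpha>\<in>R. ennreal (p \<alpha> / P) * X \<alpha>) \<le> (\<Sum>\<alpha>\<in>R. ennreal (p \<alpha> / P * w \<alpha>))"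
    by (rule sum_mono) (rule trm)
  also have "\<dots> = ennreal (\<Sum>\<alpha>\<in>R. p \<alpha> / P * w \<alpha>)"
    using pnn P w(1) by (intro sum_ennreal) simp
  also have "(\<Sum>\<alpha>\<in>R. p \<alpha> / P * w \<alpha>) = (\<Sum>\<alpha>\<in>R. p \<alpha> * w \<alpha>) / P"
    by (simp add: sum_divide_distrib)
  finally have sm: "(\<Sum>\<alpha>\<in>R. ennreal (p \<alpha> / P) * X \<alpha>) \<le> ennreal ((\<Sum>\<alpha>\<in>R. p \<alpha> * w \<alpha>) / P)" .
  have snn: "0 \<le> (\<Sum>\<alpha>\<in>R. p \<alpha> * w \<alpha>)" using pnn w(1) by (simp add: sum_nonneg)
  have "tc_trunc S R vol Q (Suc k) c \<le> ennreal (1 / P) + ennreal ((\<Sum>\<alpha>\<in>R. p \<alpha> * w \<alpha>) / P)"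
  proof -
    have "tc_trunc S R vol Q (Suc k) c = ennreal (1 / P) + (if \<exists>\<alpha>\<in>Q. applicable c \<alpha> then
        (\<Sum>\<alpha>\<in>R. ennreal (p \<alpha> / P) * X \<alpha>) else 0)"
      by (simp add: span_def P_def p_def X_def)
    also have "\<dots> \<le> ennreal (1 / P) + ennreal ((\<Sum>\<alpha>\<in>R. p \<alpha> * w \<alpha>) / P)"
      using sm by (auto intro: add_left_mono)
    finally show ?thesis .
  qed
  also have "\<dots> = ennreal (1 / P + (\<Sum>\<alpha>\<in>R. p \<alpha> * w \<alpha>) / P)"
    by (rule ennreal_plus[symmetric]) (use P snn in auto)
  also have "1 / P + (\<Sum>\<alpha>\<in>R. p \<alpha> * w \<alpha>) / P = (1 + (\<Sum>\<alpha>\<in>R. p \<alpha> * w \<alpha>)) / P"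
    by (simp add: add_divide_distrib)
  also have "\<dots> \<le> ennreal (f c)"
    using w(2) P by (intro ennreal_leI) (simp add: divide_le_eq)
  finally show ?case .
qed

lemma tc_lb:
  assumes fin: "finite R" and dR: "\<delta> \<in> R" and vol: "0 < vol"
    and pd: "\<And>c. c \<in> W \<Longrightarrow> propensity S R vol c \<delta> = pd" "0 < pd" "pd \<le> Pm"
    and Pm: "\<And>c. c \<in> W \<Longrightarrow> total_prop S R vol c \<le> Pm"
    and app: "\<And>c. c \<in> W \<Longrightarrow> applicable c \<delta>"
    and cl: "\<And>c \<alpha>. c \<in> W \<Longrightarrow> \<alpha> \<in> R \<Longrightarrow> \<alpha> \<noteq> \<delta> \<Longrightarrow> propensity S R vol c \<alpha> \<noteq> 0 \<Longrightarrow> apply_rx c \<alpha> \<in> W"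
  shows "c \<in> W \<Longrightarrow> ennreal ((1 - (1 - pd/Pm)^k) / pd) \<le> tc_trunc S R vol {\<delta>} k c"
proof (induction k arbitrary: c)
  case 0
  then show ?case by simp
next
  case (Suc k)
  define q where "q = 1 - pd / Pm"
  have Pmp: "0 < Pm" using pd by linarith
  have q: "0 \<le> q" "q \<le> 1" using pd Pmp by (auto simp: q_def field_simps)
  define g where "g = (1 - q^k) / pd"
  have qk: "0 \<le> q^k" "q^k \<le> 1" using q by (auto simp: power_le_one)
  have g: "0 \<le> g" using qk pd by (simp add: g_def)
  define P where "P = total_prop S R vol c"
  define p where "p = propensity S R vol c"
  have pnn: "0 \<le> p \<alpha>" for \<alpha> using vol by (simp add: p_def propensity_def prod_nonneg)
  have pdc: "p \<delta> = pd" using pd(1)[OF Suc.prems] by (simp add: p_def)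
  have Psplit: "P = pd + (\<Sum>\<alpha>\<in>R - {\<delta>}. p \<alpha>)"
    using fin dR pdc by (simp add: P_def total_prop_def p_def[symmetric] sum.remove)
  have "0 \<le> (\<Sum>\<alpha>\<in>R - {\<delta>}. p \<alpha>)" using pnn by (simp add: sum_nonneg)
  then have P: "0 < P" "P \<le> Pm" "pd \<le> P" using Psplit pd(2) Pm[OF Suc.prems]
    by (auto simp: P_def)
  define X where "X \<alpha> = (if \<alpha> \<in> {\<delta>} \<or> \<not> (\<exists>\<beta>\<in>{\<delta>}. applicable (apply_rx c \<alpha>) \<beta>) then 0
      else tc_trunc S R vol {\<delta>} k (apply_rx c \<alpha>))" for \<alpha>
  have trm: "ennreal (p \<alpha> / P * (if \<alpha> = \<delta> then 0 else g)) \<le> ennreal (p \<alpha> / P) * X \<alpha>" if "\<alpha> \<in> R" for \<alpha>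
  proof (cases "p \<alpha> = 0 \<or> \<alpha> = \<delta>")
    case True
    then show ?thesis by auto
  next
    case False
    then have h: "apply_rx c \<alpha> \<in> W" using cl[OF Suc.prems that] by (auto simp: p_def)
    then have "X \<alpha> = tc_trunc S R vol {\<delta>} k (apply_rx c \<alpha>)" using False app by (simp add: X_def)
    then have "ennreal g \<le> X \<alpha>" using Suc.IH[OF h] by (simp add: g_def q_def)
    then have "ennreal (p \<alpha> / P) * ennreal g \<le> ennreal (p \<alpha> / P) * X \<alpha>"
      by (simp add: mult_left_mono)
    moreover have "ennreal (p \<alpha> / P) * ennreal g = ennreal (p \<alpha> / P * (if \<alpha> = \<delta> then 0 else g))"
      using pnn[of \<alpha>] P g False by (simp add: ennreal_mult[symmetric])
    ultimately show ?thesis by simp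
  qed
  have "ennreal (\<Sum>\<alpha>\<in>R. p \<alpha> / P * (if \<alpha> = \<delta> then 0 else g)) = (\<Sum>\<alpha>\<in>R. ennreal (p \<alpha> / P * (if \<alpha> = \<delta> then 0 else g)))"
    using pnn P g by (intro sum_ennreal[symmetric]) simp
  also have "\<dots> \<le> (\<Sum>\<alpha>\<in>R. ennreal (p \<alpha> / P) * X \<alpha>)"
    by (rule sum_mono) (rule trm)
  finally have sm: "ennreal (\<Sum>\<alpha>\<in>R. p \<alpha> / P * (if \<alpha> = \<delta> then 0 else g)) \<le> (\<Sum>\<alpha>\<in>R. ennreal (p \<alpha> / P) * X \<alpha>)" .
  have "(\<Sum>\<alpha>\<in>R. p \<alpha> / P * (if \<alpha> = \<delta> then 0 else g)) = (\<Sum>\<alpha>\<in>R - {\<delta>}. p \<alpha> / P * g)"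
    using fin dR by (simp add: sum.remove)
  also have "\<dots> = (P - pd) / P * g" using Psplit by (simp add: sum_distrib_right[symmetric] sum_divide_distrib[symmetric])
  finally have sv: "(\<Sum>\<alpha>\<in>R. p \<alpha> / P * (if \<alpha> = \<delta> then 0 else g)) = (P - pd) / P * g" .
  have real: "(1 - q^Suc k) / pd \<le> 1 / P + (P - pd) / P * g"
  proof -
    have e1: "1 / P + (P - pd) / P * g = g + q^k / P"
      using P pd by (simp add: g_def field_simps)
    have e2: "(1 - q^Suc k) / pd = g + q^k / Pm"
      using Pmp pd by (simp add: g_def q_def field_simps)
    have "q^k / Pm \<le> q^k / P" using P qk by (intro divide_left_mono) auto
    then show ?thesis using e1 e2 by simp
  qed
  have "tc_trunc S R vol {\<delta>} (Suc k) c = ennreal (1 / P) + (\<Sum>\<alpha>\<in>R. ennreal (p \<alpha> / P) * X \<alpha>)"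
    using app[OF Suc.prems] by (simp add: span_def P_def p_def X_def)
  moreover have "ennreal (1 / P) + ennreal ((P - pd) / P * g) = ennreal (1 / P + (P - pd) / P * g)"
    using P g pd by (intro ennreal_plus[symmetric]) (auto intro!: mult_nonneg_nonneg divide_nonneg_pos)
  ultimately have "ennreal (1 / P + (P - pd) / P * g) \<le> tc_trunc S R vol {\<delta>} (Suc k) c"
    using sm sv by (metis add_left_mono)
  moreover have "ennreal ((1 - q^Suc k) / pd) \<le> ennreal (1 / P + (P - pd) / P * g)"
    using real by (rule ennreal_leI)
  ultimately show ?case by (simp add: q_def)
qed




definition Inv :: "conf \<Rightarrow> conf \<Rightarrow> bool" where
  "Inv c0 c \<longleftrightarrow> supp_in S0 c \<and> size1 S0 c = size1 S0 c0 \<and> c0 7 \<le> c 7 \<and> c 4 + c 5 \<le> 1 \<and>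
     1 \<le> c 6 \<and> c 6 \<le> 2 \<and> (c 7 = c0 7 \<longrightarrow> c 6 = 2 \<and> c 4 + c 5 = 1)"

lemma apply_at: "apply_rx c (r, p) A = c A - r A + p A"
  by (simp add: apply_rx_def)

lemma ev2_66: "ev2 6 6 A = (if A = 6 then 2 else 0)" and ev2_67: "ev2 6 7 A = (if A = 6 then 1 else if A = 7 then 1 else 0)"
  by (auto simp: ev2_def ev_def)

lemma app_dl: "applicable c dl \<longleftrightarrow> 2 \<le> c 6"
  by (auto simp: applicable_def dl_def ev2_66)
lemma app_t12: "applicable c t12 \<longleftrightarrow> 1 \<le> c 4"
  by (auto simp: applicable_def t12_def ev_def)
lemma app_eps: "applicable c eps \<longleftrightarrow> 1 \<le> c 4"
  by (auto simp: applicable_def eps_def ev_def)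
lemma app_t21: "applicable c t21 \<longleftrightarrow> 1 \<le> c 5"
  by (auto simp: applicable_def t21_def ev_def)

lemma apply_t12: "apply_rx c t12 A = (if A = 4 then c 4 - 1 else if A = 5 then c 5 + 1 else c A)"
  by (auto simp: t12_def apply_at ev_def)
lemma apply_eps: "apply_rx c eps A = (if A = 4 then c 4 - 1 else if A = 7 then c 7 + 1 else c A)"
  by (auto simp: eps_def apply_at ev_def)
lemma apply_t21: "apply_rx c t21 A = (if A = 5 then c 5 - 1 else if A = 4 then c 4 + 1 else c A)"
  by (auto simp: t21_def apply_at ev_def)
lemma apply_dl: "apply_rx c dl A = (if A = 6 then c 6 - 2 + 1 else if A = 7 then c 7 + 1 else c A)"
  by (auto simp: dl_def apply_at ev2_66 ev2_67)

lemma Inv_step: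
  assumes "Inv c0 c" "\<alpha> \<in> R0" "applicable c \<alpha>"
  shows "Inv c0 (apply_rx c \<alpha>)"
proof -
  have base: "supp_in S0 (apply_rx c \<alpha>)" "size1 S0 (apply_rx c \<alpha>) = size1 S0 c"
    using R0_apply[OF assms(2,3)] assms(1) by (auto simp: Inv_def)
  consider "\<alpha> = t12" | "\<alpha> = eps" | "\<alpha> = t21" | "\<alpha> = dl" | "fst \<alpha> = snd \<alpha>"
    using R0_cases[OF assms(2)] by auto
  then show ?thesis
  proof cases
    case 1
    then show ?thesis using assms base app_t12[of c] by (simp add: Inv_def apply_t12)
  next
    case 2
    then show ?thesis using assms base app_eps[of c] by (simp add: Inv_def apply_eps)
  next
    case 3
    then show ?thesis using assms base app_t21[of c] by (simp add: Inv_def apply_t21)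
  next
    case 4
    then show ?thesis using assms base app_dl[of c] by (simp add: Inv_def apply_dl)
  next
    case 5
    then have "apply_rx c \<alpha> = c" using void_apply[of c "fst \<alpha>"] assms(3)
      by (metis prod.collapse)
    then show ?thesis using assms by simp
  qed
qed

lemma Inv_reach:
  assumes "reach R0 c c'" "Inv c0 c"
  shows "Inv c0 c'"
  using assms unfolding reach_def
proof (induction rule: rtranclp_induct)
  case base
  then show ?case .
next
  case (step y z)
  then show ?case using Inv_step by (auto simp: step_def)
qed

lemma mu_id: "supp_in S0 c \<Longrightarrow> mu_conf S0 id c = c"
proof
  fix u assume s: "supp_in S0 c"
  show "mu_conf S0 id c u = c u"
  proof (cases "u \<in> S0")
    case True
    then have "{A \<in> S0. id A = u} = {u}" by auto
    then show ?thesis by (simp add: mu_conf_def)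
  next
    case False
    then have "{A \<in> S0. id A = u} = {}" by auto
    then show ?thesis using s False by (simp add: mu_conf_def supp_in_def)
  qed
qed

lemma valid_init_D:
  assumes "valid_init S0 id C0 c0"
  shows "is_config S0 c0" "c0 4 = 1" "c0 5 = 0" "c0 6 = 2" "Inv c0 c0"
proof -
  show ic: "is_config S0 c0" using assms by (simp add: valid_init_def)
  then have s: "supp_in S0 c0" by (simp add: is_config_def)
  obtain c where "c \<in> Zset S0 id C0 c0" using assms by (auto simp: valid_init_def)
  then have "(c0, mu_conf S0 id c) \<in> C0" using mu_id[OF s] by (simp add: Zset_def)
  then show "c0 4 = 1" "c0 5 = 0" "c0 6 = 2" by (auto simp: C0_def)
  then show "Inv c0 c0" using s by (simp add: Inv_def)
qed

lemma stab_iff: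
  assumes "valid_init S0 id C0 c0" "Inv c0 c"
  shows "c \<in> stab R0 (Zset S0 id C0 c0) \<longleftrightarrow> c0 7 < c 7"
proof
  assume "c \<in> stab R0 (Zset S0 id C0 c0)"
  then have "c \<in> Zset S0 id C0 c0" by (simp add: stab_def)
  then show "c0 7 < c 7"
    using mu_id assms(2) valid_init_D(1)[OF assms(1)]
    by (auto simp: Zset_def C0_def Inv_def is_config_def)
next
  assume lt: "c0 7 < c 7"
  have s0: "supp_in S0 c0" "1 \<le> size1 S0 c0" using valid_init_D(1)[OF assms(1)] by (auto simp: is_config_def)
  have Z: "c' \<in> Zset S0 id C0 c0" if "Inv c0 c'" "c0 7 < c' 7" for c'
  proof -
    have "supp_in S0 c'" "size1 S0 c' = size1 S0 c0" using that by (auto simp: Inv_def)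
    then show ?thesis using s0 that valid_init_D[OF assms(1)] mu_id
      by (simp add: Zset_def C0_def is_config_def)
  qed
  have "c' \<in> Zset S0 id C0 c0" if "reach R0 c c'" for c'
  proof -
    have i: "Inv c0 c'" using Inv_reach[OF that assms(2)] .
    have "c 7 \<le> c' 7" using that unfolding reach_def
    proof (induction rule: rtranclp_induct)
      case base then show ?case by simp
    next
      case (step y z)
      then obtain \<alpha> where "\<alpha> \<in> R0" "applicable y \<alpha>" "z = apply_rx y \<alpha>" by (auto simp: step_def)
      then have "y 7 \<le> z 7" using R0_props(5)[of \<alpha>] by (cases \<alpha>) (simp add: apply_at)
      then show ?case using step by simp
    qed
    then show ?thesis using Z[OF i] lt by simp
  qed
  then show "c \<in> stab R0 (Zset S0 id C0 c0)" using Z[OF assms(2) lt] by (simp add: stab_def)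
qed

lemma exec_Inv:
  assumes "execution S0 R0 cs as" "valid_init S0 id C0 (cs 0)"
  shows "Inv (cs 0) (cs t)"
proof (induction t)
  case 0
  then show ?case using valid_init_D(5)[OF assms(2)] .
next
  case (Suc t)
  then show ?case using assms(1) Inv_step by (simp add: execution_def)
qed

lemma exec_6_const:
  assumes "execution S0 R0 cs as" "valid_init S0 id C0 (cs 0)" "t \<le> s" "\<forall>u. t \<le> u \<and> u < s \<longrightarrow> as u \<noteq> dl"
  shows "cs s 6 = cs t 6"
  using assms(3,4)
proof (induction s)
  case 0
  then show ?case by simp
next
  case (Suc s)
  show ?case
  proof (cases "t = Suc s")
    case True then show ?thesis by simp
  next
    case False
    then have "t \<le> s" "as s \<noteq> dl" using Suc.prems by auto
    moreover have "as s \<in> R0" "applicable (cs s) (as s)" "cs (Suc s) = apply_rx (cs s) (as s)"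
      using assms(1) by (auto simp: execution_def)
    moreover have "supp_in S0 (cs s)" using exec_Inv[OF assms(1,2)] by (simp add: Inv_def)
    ultimately show ?thesis using Suc R0_apply(4) by auto
  qed
qed

lemma fires_dl:
  assumes "valid_fair_exec S0 R0 id C0 cs as" "cs t 6 = 2"
  shows "\<exists>s\<ge>t. as s = dl"
proof (rule ccontr)
  assume no: "\<not> (\<exists>s\<ge>t. as s = dl)"
  have ex: "execution S0 R0 cs as" "valid_init S0 id C0 (cs 0)" "weakly_fair R0 cs as"
    using assms(1) by (auto simp: valid_fair_exec_def)
  have dR: "dl \<in> R0" by (simp add: R0_def)
  have "applicable (cs t) dl" using assms(2) app_dl by simp
  then obtain s where s: "s \<ge> t" "as s = dl \<or> \<not> applicable (cs s) dl"
    using ex(3) dR unfolding weakly_fair_def by blast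
  then have "\<not> applicable (cs s) dl" using no by auto
  moreover have "cs s 6 = cs t 6" using exec_6_const[OF ex(1,2) s(1)] no by auto
  ultimately show False using assms(2) app_dl by simp
qed

lemma dl_eps_incr:
  assumes "execution S0 R0 cs as" "as s = dl \<or> as s = eps"
  shows "cs (Suc s) 7 = cs s 7 + 1"
proof -
  have "cs (Suc s) = apply_rx (cs s) (as s)" using assms(1) by (simp add: execution_def)
  then show ?thesis using assms(2) by (auto simp: apply_dl apply_eps)
qed

lemma stably: "stably_correct S0 R0 id C0"
  unfolding stably_correct_def
proof (intro allI impI)
  fix cs as assume v: "valid_fair_exec S0 R0 id C0 cs as"
  have ex: "execution S0 R0 cs as" "valid_init S0 id C0 (cs 0)"
    using v by (auto simp: valid_fair_exec_def)
  have "cs 0 6 = 2" using valid_init_D[OF ex(2)] by simp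
  then obtain s where "as s = dl" using fires_dl[OF v] by blast
  then have "cs (Suc s) 7 = cs s 7 + 1" using dl_eps_incr[OF ex(1)] by auto
  moreover have "cs 0 7 \<le> cs s 7" using exec_Inv[OF ex, of s] by (simp add: Inv_def)
  ultimately have "cs 0 7 < cs (Suc s) 7" by simp
  then have "cs (Suc s) \<in> stab R0 (Zset S0 id C0 (cs 0))"
    using stab_iff[OF ex(2) exec_Inv[OF ex]] by simp
  then show "\<exists>t. cs t \<in> stab R0 (Zset S0 id C0 (cs 0))" by blast
qed

lemma void_alone:
  assumes x: "(r, p) \<in> R0" "r = p"
  shows "Rof R0 r = {(r, p)}"
proof -
  have "(r, p) \<notin> NV R0" using x by (simp add: NV_def)
  then have "r \<in> reactants - {ev 4, ev 5, ev2 6 6}" using R0_cases[OF x(1)] NV_R0 x by auto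
  then show "Rof R0 r = {(r, p)}" using Rof_void x by simp
qed

lemma protocol: "crn_protocol S0 R0 S0 id C0"
proof -
  have "crn S0 R0"
    unfolding crn_def
  proof (intro conjI)
    show "finite S0" by (simp add: S0_def)
    show "finite R0" by (rule R0_finite)
    show "\<forall>(r, p)\<in>R0. supp_in S0 r \<and> supp_in S0 p \<and> size1 S0 r \<in> {1, 2} \<and> size1 S0 r \<le> size1 S0 p"
      using R0_props by fastforce
    show "\<forall>r. supp_in S0 r \<and> 1 \<le> size1 S0 r \<and> size1 S0 r \<le> 2 \<longrightarrow> Rof R0 r \<noteq> {}"
    proof (intro allI impI)
      fix r assume "supp_in S0 r \<and> 1 \<le> size1 S0 r \<and> size1 S0 r \<le> 2"
      then have r: "r \<in> reactants" by (simp add: reactants_def)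
      show "Rof R0 r \<noteq> {}"
      proof (cases "r \<in> {ev 4, ev 5, ev2 6 6}")
        case True
        then show ?thesis using Rof_e0 Rof_e1 Rof_dl by auto
      next
        case False
        then show ?thesis using Rof_void[of r] r by auto
      qed
    qed
    show "\<forall>(r, p)\<in>R0. r = p \<longrightarrow> Rof R0 r = {(r, p)}"
      using void_alone by blast
  qed
  moreover have "interface S0 S0 id C0" by (auto simp: interface_def C0_def)
  moreover have "finite_density S0 R0 id C0"
    unfolding finite_density_def
  proof (intro exI allI impI)
    fix c0 c assume h: "valid_init S0 id C0 c0 \<and> reach R0 c0 c"
    then have "Inv c0 c" using Inv_reach valid_init_D(5) by blast
    then show "real (size1 S0 c) \<le> 1 * real (size1 S0 c0)" by (simp add: Inv_def)
  qed
  ultimately show ?thesis by (simp add: crn_protocol_def)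
qed




lemma prop_le_total: "\<alpha> \<in> R0 \<Longrightarrow> 0 < vol \<Longrightarrow> propensity S0 R0 vol c \<alpha> \<le> total_prop S0 R0 vol c"
  unfolding total_prop_def using R0_finite prop_nonneg
  by (intro member_le_sum) auto

lemma dl_R0: "dl \<in> R0" and t12_R0: "t12 \<in> R0" and eps_R0: "eps \<in> R0" and t21_R0: "t21 \<in> R0"
  by (auto simp: R0_def)

lemma distinct_rx: "t12 \<noteq> eps" "t12 \<noteq> t21" "t12 \<noteq> dl" "eps \<noteq> t21" "eps \<noteq> dl" "t21 \<noteq> dl"
  using ev_ne[of 5 7] ev_ne[of 4 5] ev2_ne
  by (auto simp: t12_def eps_def t21_def dl_def)

lemma ev6_react: "ev 6 \<in> reactants - {ev 4, ev 5, ev2 6 6}"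
proof -
  have "supp_in S0 (ev 6)" by (auto simp: supp_in_def ev_def S0_def)
  moreover have "size1 S0 (ev 6) = 1" unfolding size1_S0 by (simp add: ev_def)
  ultimately show ?thesis using ev_ne[of 6 4] ev_ne[of 6 5] ev2_ne by (auto simp: reactants_def)
qed

lemma void6: "(ev 6, ev 6) \<in> R0" "propensity S0 R0 vol c (ev 6, ev 6) = real (c 6)"
proof -
  show "(ev 6, ev 6) \<in> R0" using ev6_react by (auto simp: R0_def)
  have "size1 S0 (ev 6) = 1" unfolding size1_S0 by (simp add: ev_def)
  then show "propensity S0 R0 vol c (ev 6, ev 6) = real (c 6)"
    using Rof_void[OF ev6_react] by (simp add: propensity_def prod_S0)
qed

lemma total_ge_c6: "0 < vol \<Longrightarrow> real (c 6) \<le> total_prop S0 R0 vol c"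
  using prop_le_total[OF void6(1)] void6(2) by metis

lemma total_pos_dl: "0 < vol \<Longrightarrow> c 6 = 2 \<Longrightarrow> 0 < total_prop S0 R0 vol c"
proof -
  assume a: "0 < vol" "c 6 = 2"
  then have "1 / vol \<le> total_prop S0 R0 vol c" using prop_le_total[OF dl_R0, of vol c] prop_dl[of vol c] by simp
  moreover have "0 < 1 / vol" using a by simp
  ultimately show ?thesis by linarith
qed

lemma sum_w:
  fixes p :: "reaction \<Rightarrow> real"
  assumes "finite R" "x1 \<in> R" "x2 \<in> R" "x3 \<in> R" "x4 \<in> R"
  shows "(\<Sum>\<alpha>\<in>R. p \<alpha> * (a - (if \<alpha> = x1 then a else 0) - (if \<alpha> = x2 then a else 0)
            + (if \<alpha> = x3 then b else 0) + (if \<alpha> = x4 then d else 0)))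
       = a * sum p R - a * p x1 - a * p x2 + b * p x3 + d * p x4"
proof -
  have "(\<Sum>\<alpha>\<in>R. p \<alpha> * (a - (if \<alpha> = x1 then a else 0) - (if \<alpha> = x2 then a else 0)
            + (if \<alpha> = x3 then b else 0) + (if \<alpha> = x4 then d else 0)))
     = (\<Sum>\<alpha>\<in>R. a * p \<alpha> - (if \<alpha> = x1 then a * p \<alpha> else 0) - (if \<alpha> = x2 then a * p \<alpha> else 0)
            + (if \<alpha> = x3 then b * p \<alpha> else 0) + (if \<alpha> = x4 then d * p \<alpha> else 0))"
    by (intro sum.cong) (auto simp: algebra_simps)
  also have "\<dots> = a * sum p R - a * p x1 - a * p x2 + b * p x3 + d * p x4"
    using assms by (simp add: sum.distrib sum_subtractf sum_distrib_left)
  finally show ?thesis .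
qed

definition Wup :: "conf set" where "Wup = {c. supp_in S0 c \<and> c 6 = 2 \<and> c 4 + c 5 = 1}"
definition fup :: "conf \<Rightarrow> real" where "fup c = (if c 4 = 1 then 3 else 4)"

lemma TC_up:
  assumes vol: "0 < vol" and c: "c \<in> Wup"
  shows "TC S0 R0 vol {dl, eps} c \<le> 4"
proof -
  have "tc_trunc S0 R0 vol {dl, eps} k c \<le> ennreal (fup c)" for k
  proof (rule tc_ub[OF R0_finite vol, where W = Wup])
    show "c \<in> Wup" by (rule c)
    show "0 < total_prop S0 R0 vol c" if "c \<in> Wup" for c
      using total_pos_dl[OF vol] that by (simp add: Wup_def)
  next
    fix c assume cW: "c \<in> Wup"
    define fc where "fc = fup c"
    define w where "w \<alpha> = (if \<alpha> = eps \<or> \<alpha> = dl then 0 else if \<alpha> = t12 then 4 else if \<alpha> = t21 then 3 else fc)" for \<alpha>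
    have wadd: "w \<alpha> = fc - (if \<alpha> = eps then fc else 0) - (if \<alpha> = dl then fc else 0)
            + (if \<alpha> = t12 then 4 - fc else 0) + (if \<alpha> = t21 then 3 - fc else 0)" for \<alpha>
      using distinct_rx by (auto simp: w_def)
    have fc: "fc = 3 \<or> fc = 4" by (simp add: fc_def fup_def)
    define P where "P = total_prop S0 R0 vol c"
    define p where "p = propensity S0 R0 vol c"
    have sumw: "(\<Sum>\<alpha>\<in>R0. p \<alpha> * w \<alpha>) = fc * P - fc * p eps - fc * p dl + (4 - fc) * p t12 + (3 - fc) * p t21"
      unfolding wadd using sum_w[OF R0_finite eps_R0 dl_R0 t12_R0 t21_R0, of p fc "4 - fc" "3 - fc"]
      by (simp add: P_def p_def total_prop_def)
    have c6: "c 6 = 2" and c45: "c 4 + c 5 = 1" and sc: "supp_in S0 c" using cW by (auto simp: Wup_def)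
    have pdl: "p dl = 1 / vol" using c6 by (simp add: p_def prop_dl)
    have "1 + (\<Sum>\<alpha>\<in>R0. p \<alpha> * w \<alpha>) \<le> fc * P"
    proof (cases "c 4 = 1")
      case True
      then have "c 5 = 0" "fc = 3" using c45 by (auto simp: fc_def fup_def)
      then show ?thesis using True vol unfolding sumw pdl by (simp add: p_def prop_t12 prop_eps prop_t21)
    next
      case False
      then have "c 4 = 0" "c 5 = 1" "fc = 4" using c45 by (auto simp: fc_def fup_def)
      then show ?thesis using vol unfolding sumw pdl by (simp add: p_def prop_t12 prop_eps prop_t21)
    qed
    moreover have "\<forall>\<alpha>\<in>R0. 0 \<le> w \<alpha> \<and> (p \<alpha> \<noteq> 0 \<longrightarrow> \<alpha> \<notin> {dl, eps} \<longrightarrow>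
        (\<exists>\<beta>\<in>{dl, eps}. applicable (apply_rx c \<alpha>) \<beta>) \<longrightarrow> apply_rx c \<alpha> \<in> Wup \<and> fup (apply_rx c \<alpha>) \<le> w \<alpha>)"
    proof
      fix \<alpha> assume aR: "\<alpha> \<in> R0"
      have "0 \<le> w \<alpha>" using fc by (auto simp: w_def)
      moreover have "apply_rx c \<alpha> \<in> Wup \<and> fup (apply_rx c \<alpha>) \<le> w \<alpha>" if pa: "p \<alpha> \<noteq> 0" and nq: "\<alpha> \<notin> {dl, eps}"
      proof -
        have ap: "applicable c \<alpha>" using prop_applicable[OF aR] pa by (simp add: p_def)
        have sa: "supp_in S0 (apply_rx c \<alpha>)" using R0_apply(1)[OF aR ap sc] .
        consider "\<alpha> = t12" | "\<alpha> = t21" | "fst \<alpha> = snd \<alpha>" using R0_cases[OF aR] nq by auto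
        then show ?thesis
        proof cases
          case 1
          then have "c 4 = 1" "c 5 = 0" using ap app_t12 c45 by auto
          then show ?thesis using 1 sa c6 by (simp add: Wup_def fup_def apply_t12 w_def distinct_rx)
        next
          case 2
          then have "c 4 = 0" "c 5 = 1" using ap app_t21 c45 by auto
          then show ?thesis using 2 sa c6 distinct_rx by (simp add: Wup_def fup_def apply_t21 w_def)
        next
          case 3
          then have "apply_rx c \<alpha> = c" using void_apply[of c "fst \<alpha>"] ap by (metis prod.collapse)
          moreover have "\<alpha> \<noteq> t12" "\<alpha> \<noteq> t21" "\<alpha> \<noteq> eps" "\<alpha> \<noteq> dl"
            using 3 NV_R0 by (auto simp: NV_def)
          ultimately show ?thesis using cW by (simp add: w_def fc_def)
        qed
      qed
      ultimately show "0 \<le> w \<alpha> \<and> (p \<alpha> \<noteq> 0 \<longrightarrow> \<alpha> \<notin> {dl, eps} \<longrightarrow>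
        (\<exists>\<beta>\<in>{dl, eps}. applicable (apply_rx c \<alpha>) \<beta>) \<longrightarrow> apply_rx c \<alpha> \<in> Wup \<and> fup (apply_rx c \<alpha>) \<le> w \<alpha>)"
        by blast
    qed
    ultimately show "\<exists>w. (\<forall>\<alpha>\<in>R0. 0 \<le> w \<alpha> \<and> (propensity S0 R0 vol c \<alpha> \<noteq> 0 \<longrightarrow> \<alpha> \<notin> {dl, eps} \<longrightarrow>
        (\<exists>\<beta>\<in>{dl, eps}. applicable (apply_rx c \<alpha>) \<beta>) \<longrightarrow> apply_rx c \<alpha> \<in> Wup \<and> fup (apply_rx c \<alpha>) \<le> w \<alpha>)) \<and>
        1 + (\<Sum>\<alpha>\<in>R0. propensity S0 R0 vol c \<alpha> * w \<alpha>) \<le> fup c * total_prop S0 R0 vol c"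
      unfolding p_def P_def fc_def by blast
  qed
  then have "TC S0 R0 vol {dl, eps} c \<le> ennreal (fup c)"
    unfolding TC_def by (rule SUP_least)
  also have "\<dots> \<le> 4" by (simp add: fup_def)
  finally show ?thesis .
qed

lemma tc_empty: "tc_trunc S R vol {} k c \<le> ennreal (span S R vol c)"
  by (cases k) auto

lemma TC_empty_le: "TC S R vol {} c \<le> ennreal (span S R vol c)"
  unfolding TC_def by (rule SUP_least) (rule tc_empty)

lemma TC_ge_span: "ennreal (span S R vol c) \<le> TC S R vol Q c"
proof -
  have "ennreal (span S R vol c) \<le> tc_trunc S R vol Q 1 c" by simp
  also have "\<dots> \<le> TC S R vol Q c" unfolding TC_def by (rule SUP_upper) simp
  finally show ?thesis .
qed




definition rho_good :: "conf \<Rightarrow> reaction set" where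
  "rho_good c = (if c 6 = 2 \<and> c 4 + c 5 = 1 then {dl, eps} else {})"

lemma stab_facts:
  assumes v: "valid_fair_exec S0 R0 id C0 cs as"
  shows "\<And>t. Inv (cs 0) (cs t)"
    "\<And>t. cs 0 7 < cs t 7 \<Longrightarrow> stab_step S0 R0 id C0 cs \<le> t"
    "\<And>t. t < stab_step S0 R0 id C0 cs \<Longrightarrow> cs t 7 = cs 0 7"
proof -
  have ex: "execution S0 R0 cs as" "valid_init S0 id C0 (cs 0)" using v by (auto simp: valid_fair_exec_def)
  show I: "Inv (cs 0) (cs t)" for t using exec_Inv[OF ex] .
  have st: "cs t \<in> stab R0 (Zset S0 id C0 (cs 0)) \<longleftrightarrow> cs 0 7 < cs t 7" for t
    using stab_iff[OF ex(2) I] .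
  show "stab_step S0 R0 id C0 cs \<le> t" if "cs 0 7 < cs t 7" for t
    unfolding stab_step_def using st that by (metis Least_le)
  show "cs t 7 = cs 0 7" if "t < stab_step S0 R0 id C0 cs" for t
  proof -
    have "\<not> cs t \<in> stab R0 (Zset S0 id C0 (cs 0))" using that unfolding stab_step_def by (rule not_less_Least)
    then show ?thesis using st I[of t] by (simp add: Inv_def)
  qed
qed

lemma RT_up:
  assumes v: "valid_fair_exec S0 R0 id C0 cs as" and vol: "0 < vol"
  shows "RT_exec S0 R0 id C0 vol rho_good \<sigma> cs as \<le> 4"
proof -
  have ex: "execution S0 R0 cs as" "valid_init S0 id C0 (cs 0)" using v by (auto simp: valid_fair_exec_def)
  note I = stab_facts(1)[OF v] and ts_le = stab_facts(2)[OF v] and ts_lt = stab_facts(3)[OF v]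
  define ts where "ts = stab_step S0 R0 id C0 cs"
  define t0 where "t0 = \<sigma> 0"
  define Q where "Q = rho_good (cs t0)"
  define Pt where "Pt s = (t0 < s \<and> (as (s - 1) \<in> Q \<or> (\<exists>u. t0 \<le> u \<and> u \<le> s \<and> (\<forall>\<alpha>\<in>Q. \<not> applicable (cs u) \<alpha>))))" for s
  have r1: "rnd rho_good \<sigma> cs as 1 = (LEAST s. Pt s)" by (simp add: tau_def Pt_def Q_def t0_def)
  have exP: "\<exists>s. Pt s"
  proof (cases "Q = {}")
    case True
    then have "Pt (Suc t0)" by (auto simp: Pt_def)
    then show ?thesis by blast
  next
    case False
    then have "cs t0 6 = 2" "Q = {dl, eps}" by (auto simp: Q_def rho_good_def split: if_splits)
    then obtain s where "s \<ge> t0" "as s = dl" using fires_dl[OF v] by blast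
    then have "Pt (Suc s)" using \<open>Q = {dl, eps}\<close> by (auto simp: Pt_def)
    then show ?thesis by blast
  qed
  define s1 where "s1 = rnd rho_good \<sigma> cs as 1"
  have P1: "Pt s1" using LeastI_ex[OF exP] r1 by (simp add: s1_def)
  have t0s1: "t0 < s1" using P1 unfolding Pt_def by blast
  have "ts \<le> s1"
  proof (cases "ts \<le> t0")
    case True
    then show ?thesis using t0s1 by linarith
  next
    case False
    then have "t0 < stab_step S0 R0 id C0 cs" unfolding ts_def by linarith
    then have "cs t0 7 = cs 0 7" by (rule ts_lt)
    then have "cs t0 6 = 2 \<and> cs t0 4 + cs t0 5 = 1" using I[of t0] by (simp add: Inv_def)
    then have Qe: "Q = {dl, eps}" by (simp add: Q_def rho_good_def)
    from P1 consider "as (s1 - 1) \<in> Q" | "\<exists>u. t0 \<le> u \<and> u \<le> s1 \<and> (\<forall>\<alpha>\<in>Q. \<not> applicable (cs u) \<alpha>)"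
      by (auto simp: Pt_def)
    then show ?thesis
    proof cases
      case 1
      have s1p: "Suc (s1 - 1) = s1" using t0s1 by linarith
      have "cs (Suc (s1 - 1)) 7 = cs (s1 - 1) 7 + 1" using dl_eps_incr[OF ex(1)] 1 Qe by auto
      moreover have "cs 0 7 \<le> cs (s1 - 1) 7" using I[of "s1 - 1"] by (simp add: Inv_def)
      ultimately have "cs 0 7 < cs s1 7" using s1p by simp
      then show ?thesis unfolding ts_def by (rule ts_le)
    next
      case 2
      then obtain u where u: "u \<le> s1" "\<not> applicable (cs u) dl" using Qe by auto
      then have "cs u 6 \<noteq> 2" using app_dl by auto
      then have "cs u 7 \<noteq> cs 0 7" using I[of u] by (auto simp: Inv_def)
      then have "cs 0 7 < cs u 7" using I[of u] by (simp add: Inv_def)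
      then have "stab_step S0 R0 id C0 cs \<le> u" by (rule ts_le)
      then show ?thesis using u(1) unfolding ts_def by linarith
    qed
  qed
  define istar where "istar = (LEAST i. ts \<le> rnd rho_good \<sigma> cs as i)"
  have "istar \<le> 1" unfolding istar_def using \<open>ts \<le> s1\<close> s1_def by (metis Least_le)
  define F where "F i = TC S0 R0 vol (rho_good (cs (\<sigma> (rnd rho_good \<sigma> cs as i)))) (cs (\<sigma> (rnd rho_good \<sigma> cs as i)))" for i
  have "RT_exec S0 R0 id C0 vol rho_good \<sigma> cs as = (\<Sum>i<istar. F i)"
    by (simp add: RT_exec_def Let_def istar_def ts_def F_def)
  also have "\<dots> \<le> (\<Sum>i<1. F i)"
    using \<open>istar \<le> 1\<close> by (intro sum_mono2) auto
  also have "\<dots> = TC S0 R0 vol Q (cs t0)" by (simp add: F_def Q_def t0_def)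
  also have "\<dots> \<le> 4"
  proof (cases "cs t0 6 = 2 \<and> cs t0 4 + cs t0 5 = 1")
    case True
    then have "cs t0 \<in> Wup" "Q = {dl, eps}" using I[of t0] by (auto simp: Wup_def Inv_def Q_def rho_good_def)
    then show ?thesis using TC_up[OF vol] by simp
  next
    case False
    then have Qe: "Q = {}" by (simp add: Q_def rho_good_def)
    have "1 \<le> real (cs t0 6)" using I[of t0] by (simp add: Inv_def)
    then have "1 \<le> total_prop S0 R0 vol (cs t0)" using total_ge_c6[OF vol, of "cs t0"] by linarith
    then have "1 / total_prop S0 R0 vol (cs t0) \<le> 1" by simp
    then have "span S0 R0 vol (cs t0) \<le> 4" by (simp add: span_def)
    then have "ennreal (span S0 R0 vol (cs t0)) \<le> 4"
      by (metis ennreal_leI ennreal_numeral)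
    then show ?thesis using TC_empty_le[of S0 R0 vol "cs t0"] Qe by (metis order.trans)
  qed
  finally show ?thesis .
qed

lemma RT_stab_up:
  assumes "0 < \<phi> n"
  shows "RT_stab S0 R0 id C0 \<phi> (\<lambda>_. True) n \<le> 4"
  unfolding RT_stab_def
proof (rule INF_lower2)
  show "rho_good \<in> {\<rho>. runtime_policy R0 \<rho> \<and> True}"
    by (simp add: runtime_policy_def rho_good_def NV_R0)
  show "(SUP x\<in>{(cs, as, \<sigma>). valid_fair_exec S0 R0 id C0 cs as \<and> size1 S0 (cs 0) = n \<and> skipping_policy \<sigma>}.
          (case x of (cs, as, \<sigma>) \<Rightarrow> RT_exec S0 R0 id C0 (\<phi> n) rho_good \<sigma> cs as)) \<le> 4"
    using RT_up assms by (intro SUP_least) auto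
qed




definition mk :: "nat \<Rightarrow> nat \<Rightarrow> nat \<Rightarrow> nat \<Rightarrow> conf" where
  "mk a b c d = (\<lambda>A. if A = 4 then a else if A = 5 then b else if A = 6 then c else if A = 7 then d else 0)"

lemma mk_simps[simp]: "mk a b c d 4 = a" "mk a b c d 5 = b" "mk a b c d 6 = c" "mk a b c d 7 = d"
  by (simp_all add: mk_def)

lemma mk_supp[simp]: "supp_in S0 (mk a b c d)"
  by (auto simp: supp_in_def mk_def S0_def)

lemma mk_size[simp]: "size1 S0 (mk a b c d) = a + b + c + d"
  by (simp add: size1_S0)

definition c1 :: "nat \<Rightarrow> conf" where "c1 n = mk 1 0 2 (n - 3)"
definition c2 :: "nat \<Rightarrow> conf" where "c2 n = mk 0 1 2 (n - 3)"
definition c3 :: "nat \<Rightarrow> conf" where "c3 n = mk 0 0 2 (n - 2)"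
definition cf :: "nat \<Rightarrow> conf" where "cf n = mk 0 0 1 (n - 1)"

lemma apply_mk:
  assumes "3 \<le> n"
  shows "apply_rx (c1 n) t12 = c2 n" "apply_rx (c2 n) t21 = c1 n" "apply_rx (c1 n) eps = c3 n"
    "apply_rx (c3 n) dl = cf n"
  using assms by (auto simp: fun_eq_iff apply_t12 apply_t21 apply_eps apply_dl c1_def c2_def c3_def cf_def mk_def)

lemma cf_NV: "\<alpha> \<in> NV R0 \<Longrightarrow> \<not> applicable (cf n) \<alpha>"
  by (auto simp: NV_R0 app_t12 app_eps app_t21 app_dl cf_def)

lemma cf_stays: "\<alpha> \<in> R0 \<Longrightarrow> applicable (cf n) \<alpha> \<Longrightarrow> apply_rx (cf n) \<alpha> = cf n"
proof -
  assume a: "\<alpha> \<in> R0" "applicable (cf n) \<alpha>"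
  then have "\<alpha> \<notin> NV R0" using cf_NV by blast
  then have "fst \<alpha> = snd \<alpha>" using a by (simp add: NV_def)
  then show ?thesis using void_apply[of "cf n" "fst \<alpha>"] a(2) by (metis prod.collapse)
qed

definition cyc :: "nat \<Rightarrow> reaction list" where
  "cyc n = (SOME xs. set xs = {\<alpha>\<in>R0. applicable (cf n) \<alpha>})"

lemma cyc_set: "set (cyc n) = {\<alpha>\<in>R0. applicable (cf n) \<alpha>}"
proof -
  have "finite {\<alpha>\<in>R0. applicable (cf n) \<alpha>}" using R0_finite by simp
  then have "\<exists>xs. set xs = {\<alpha>\<in>R0. applicable (cf n) \<alpha>}" by (rule finite_list)
  then show ?thesis unfolding cyc_def by (rule someI_ex)
qed

lemma cyc_len: "0 < length (cyc n)"
proof -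
  have "applicable (cf n) (ev 6, ev 6)" by (auto simp: applicable_def ev_def cf_def)
  then have "(ev 6, ev 6) \<in> set (cyc n)" using cyc_set void6(1) by auto
  then show ?thesis by (cases "cyc n") auto
qed

definition ecs :: "nat \<Rightarrow> nat \<Rightarrow> nat \<Rightarrow> conf" where
  "ecs n M t = (if t < 2*M then (if even t then c1 n else c2 n) else if t = 2*M then c1 n
      else if t = 2*M+1 then c3 n else cf n)"
definition eas :: "nat \<Rightarrow> nat \<Rightarrow> nat \<Rightarrow> reaction" where
  "eas n M t = (if t < 2*M then (if even t then t12 else t21) else if t = 2*M then eps
      else if t = 2*M+1 then dl else cyc n ! (t mod length (cyc n)))"

lemma fair_tail:
  assumes "\<forall>s\<ge>T. cs s = c" "\<forall>\<alpha>\<in>R. applicable c \<alpha> \<longrightarrow> (\<forall>s. \<exists>s'\<ge>s. as s' = \<alpha>)"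
  shows "weakly_fair R cs as"
  unfolding weakly_fair_def
proof (intro allI ballI impI)
  fix t \<alpha> assume a: "\<alpha> \<in> R" "applicable (cs t) \<alpha>"
  define s0 where "s0 = max t T"
  show "\<exists>s\<ge>t. as s = \<alpha> \<or> \<not> applicable (cs s) \<alpha>"
  proof (cases "applicable (cs s0) \<alpha>")
    case True
    then have "applicable c \<alpha>" using assms(1) by (simp add: s0_def)
    then obtain s' where "s' \<ge> s0" "as s' = \<alpha>" using assms(2) a(1) by blast
    then show ?thesis by (auto simp: s0_def)
  next
    case False
    moreover have "s0 \<ge> t" by (simp add: s0_def)
    ultimately show ?thesis by blast
  qed
qed

lemma cyc_hits:
  assumes "\<alpha> \<in> set xs"
  shows "\<exists>s'\<ge>s. s' \<ge> T \<and> xs ! (s' mod length xs) = \<alpha>"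
proof -
  obtain j where j: "j < length xs" "xs ! j = \<alpha>" using assms by (auto simp: in_set_conv_nth)
  define L where "L = length xs"
  have L: "1 \<le> L" using j by (simp add: L_def)
  define s' where "s' = (s + T) * L + j"
  have "s' mod L = j" using j by (simp add: s'_def L_def)
  moreover have "s + T \<le> s'"
  proof -
    have "(s + T) * 1 \<le> (s + T) * L" using L by (rule mult_le_mono2)
    then have "s + T \<le> (s + T) * L" by (simp only: mult_1_right)
    then show ?thesis unfolding s'_def by linarith
  qed
  ultimately show ?thesis using j by (intro exI[of _ s']) (auto simp: L_def)
qed

lemma ex_valid:
  assumes n: "3 \<le> n"
  shows "valid_fair_exec S0 R0 id C0 (ecs n M) (eas n M)" "size1 S0 (ecs n M 0) = n"
proof -
  have ic1: "is_config S0 (c1 n)" using n by (simp add: is_config_def c1_def)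
  have e0: "ecs n M 0 = c1 n" by (simp add: ecs_def)
  show "size1 S0 (ecs n M 0) = n" using n by (simp add: e0 c1_def)
  have step: "eas n M t \<in> R0 \<and> applicable (ecs n M t) (eas n M t) \<and> ecs n M (Suc t) = apply_rx (ecs n M t) (eas n M t)" for t
  proof -
    consider "t < 2*M" "even t" | "t < 2*M" "odd t" | "t = 2*M" | "t = 2*M+1" | "t > 2*M+1" by linarith
    then show ?thesis
    proof cases
      case 1
      then have "Suc t < 2*M" by presburger
      then show ?thesis using 1 apply_mk[OF n] t12_R0
        by (simp add: ecs_def eas_def app_t12 c1_def)
    next
      case 2
      then show ?thesis using apply_mk[OF n] t21_R0
        by (auto simp: ecs_def eas_def app_t21 c2_def)
    next
      case 3
      then show ?thesis using apply_mk[OF n] eps_R0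
        by (auto simp: ecs_def eas_def app_eps c1_def)
    next
      case 4
      then show ?thesis using apply_mk[OF n] dl_R0
        by (auto simp: ecs_def eas_def app_dl c3_def)
    next
      case 5
      have "eas n M t \<in> set (cyc n)" using 5 cyc_len by (simp add: eas_def)
      then have "eas n M t \<in> R0" "applicable (cf n) (eas n M t)" using cyc_set by auto
      then show ?thesis using 5 cf_stays by (simp add: ecs_def)
    qed
  qed
  have ex: "execution S0 R0 (ecs n M) (eas n M)" using step ic1 e0 by (simp add: execution_def)
  have fair: "weakly_fair R0 (ecs n M) (eas n M)"
  proof (rule fair_tail[where T = "2*M+2" and c = "cf n"])
    show "\<forall>s\<ge>2*M+2. ecs n M s = cf n" by (simp add: ecs_def)
    show "\<forall>\<alpha>\<in>R0. applicable (cf n) \<alpha> \<longrightarrow> (\<forall>s. \<exists>s'\<ge>s. eas n M s' = \<alpha>)"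
    proof (intro ballI impI allI)
      fix \<alpha> s assume "\<alpha> \<in> R0" "applicable (cf n) \<alpha>"
      then have "\<alpha> \<in> set (cyc n)" using cyc_set by auto
      then obtain s' where "s' \<ge> s" "s' \<ge> 2*M+2" "cyc n ! (s' mod length (cyc n)) = \<alpha>"
        using cyc_hits[of \<alpha> "cyc n" s "2*M+2"] by auto
      then show "\<exists>s'\<ge>s. eas n M s' = \<alpha>" by (intro exI[of _ s']) (simp add: eas_def)
    qed
  qed
  have vi: "valid_init S0 id C0 (ecs n M 0)"
  proof -
    have "c3 n \<in> Zset S0 id C0 (c1 n)"
      using n mu_id[of "c1 n"] mu_id[of "c3 n"] by (simp add: Zset_def C0_def is_config_def c1_def c3_def)
    then show ?thesis using ic1 e0 by (auto simp: valid_init_def)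
  qed
  show "valid_fair_exec S0 R0 id C0 (ecs n M) (eas n M)"
    using ex fair vi by (simp add: valid_fair_exec_def)
qed




lemma ecs_7: "3 \<le> n \<Longrightarrow> t \<le> 2*M \<Longrightarrow> ecs n M t 7 = n - 3"
  by (simp add: ecs_def c1_def c2_def)

lemma ts_exec:
  assumes n: "3 \<le> n"
  shows "stab_step S0 R0 id C0 (ecs n M) = 2*M+1"
proof -
  note v = ex_valid(1)[OF n, of M]
  have ex: "execution S0 R0 (ecs n M) (eas n M)" "valid_init S0 id C0 (ecs n M 0)"
    using v by (auto simp: valid_fair_exec_def)
  have st: "ecs n M t \<in> stab R0 (Zset S0 id C0 (ecs n M 0)) \<longleftrightarrow> n - 3 < ecs n M t 7" for t
    using stab_iff[OF ex(2) stab_facts(1)[OF v]] ecs_7[OF n, of 0 M] by simp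
  have "ecs n M (2*M+1) 7 = n - 2" by (simp add: ecs_def c3_def)
  then have "n - 3 < ecs n M (2*M+1) 7" using n by simp
  moreover have "2*M+1 \<le> t" if "n - 3 < ecs n M t 7" for t
  proof (rule ccontr)
    assume "\<not> 2*M+1 \<le> t"
    then have "t \<le> 2*M" by simp
    then show False using that ecs_7[OF n] by simp
  qed
  ultimately show ?thesis unfolding stab_step_def st by (intro Least_equality) auto
qed

lemma tau_gt:
  assumes n: "3 \<le> n" and Q: "Q \<subseteq> NV R0"
  shows "t < tau (ecs n M) (eas n M) t Q"
proof -
  define s where "s = max (t+1) (2*M+2)"
  have "2*M+2 \<le> s" by (simp add: s_def)
  then have "ecs n M s = cf n" by (simp add: ecs_def)
  then have "\<forall>\<alpha>\<in>Q. \<not> applicable (ecs n M s) \<alpha>" using Q cf_NV by auto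
  moreover have "t < s" "t \<le> s" by (auto simp: s_def)
  ultimately have "t < s \<and> (eas n M (s - 1) \<in> Q \<or> (\<exists>u. t \<le> u \<and> u \<le> s \<and> (\<forall>\<alpha>\<in>Q. \<not> applicable (ecs n M u) \<alpha>)))"
    by blast
  then show ?thesis unfolding tau_def by (rule LeastI2) auto
qed

lemma rnd_ge:
  assumes n: "3 \<le> n" and rp: "runtime_policy R0 \<rho>" and sk: "skipping_policy \<sigma>"
  shows "i \<le> rnd \<rho> \<sigma> (ecs n M) (eas n M) i"
proof (induction i)
  case 0
  then show ?case by simp
next
  case (Suc i)
  let ?r = "rnd \<rho> \<sigma> (ecs n M) (eas n M) i"
  have "\<sigma> ?r < rnd \<rho> \<sigma> (ecs n M) (eas n M) (Suc i)"
    using tau_gt[OF n] rp by (simp add: runtime_policy_def)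
  moreover have "?r \<le> \<sigma> ?r" using sk by (simp add: skipping_policy_def)
  ultimately show ?case using Suc by simp
qed

lemma RT_ge_first:
  assumes n: "3 \<le> n" and rp: "runtime_policy R0 \<rho>" and sk: "skipping_policy \<sigma>"
  shows "TC S0 R0 vol (\<rho> (ecs n M (\<sigma> 0))) (ecs n M (\<sigma> 0)) \<le> RT_exec S0 R0 id C0 vol \<rho> \<sigma> (ecs n M) (eas n M)"
proof -
  define ts where "ts = stab_step S0 R0 id C0 (ecs n M)"
  define istar where "istar = (LEAST i. ts \<le> rnd \<rho> \<sigma> (ecs n M) (eas n M) i)"
  have "ts \<le> rnd \<rho> \<sigma> (ecs n M) (eas n M) ts" using rnd_ge[OF n rp sk] .
  then have "ts \<le> rnd \<rho> \<sigma> (ecs n M) (eas n M) istar" unfolding istar_def by (rule LeastI)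
  moreover have "ts = 2*M+1" using ts_exec[OF n] by (simp add: ts_def)
  ultimately have "istar \<noteq> 0"
  proof -
    assume a: "ts \<le> rnd \<rho> \<sigma> (ecs n M) (eas n M) istar" "ts = 2*M+1"
    show "istar \<noteq> 0"
    proof
      assume "istar = 0"
      then have "rnd \<rho> \<sigma> (ecs n M) (eas n M) istar = 0" by simp
      then show False using a by simp
    qed
  qed
  define F where "F i = TC S0 R0 vol (\<rho> (ecs n M (\<sigma> (rnd \<rho> \<sigma> (ecs n M) (eas n M) i)))) (ecs n M (\<sigma> (rnd \<rho> \<sigma> (ecs n M) (eas n M) i)))" for i
  have "F 0 \<le> (\<Sum>i<istar. F i)"
    using \<open>istar \<noteq> 0\<close> by (intro member_le_sum) auto
  also have "\<dots> = RT_exec S0 R0 id C0 vol \<rho> \<sigma> (ecs n M) (eas n M)"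
    by (simp add: RT_exec_def Let_def istar_def ts_def F_def)
  finally show ?thesis by (simp add: F_def)
qed

lemma TC_dl_lb:
  assumes n: "3 \<le> n" and vol: "0 < vol" and c: "supp_in S0 c" "c 6 = 2" "size1 S0 c = n"
  shows "ennreal (vol / 2) \<le> TC S0 R0 vol {dl} c"
proof -
  define W where "W = {c. supp_in S0 c \<and> c 6 = 2 \<and> size1 S0 c = n}"
  have finW: "finite W"
  proof -
    have "W \<subseteq> {f. \<forall>x. (x \<in> S0 \<longrightarrow> f x \<in> {0..n}) \<and> (x \<notin> S0 \<longrightarrow> f x = 0)}"
    proof
      fix f assume "f \<in> W"
      then have h: "supp_in S0 f" "size1 S0 f = n" by (auto simp: W_def)
      have "\<And>x. x \<in> S0 \<Longrightarrow> f x \<le> size1 S0 f"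
        unfolding size1_def by (rule member_le_sum) (auto simp: S0_def)
      then show "f \<in> {f. \<forall>x. (x \<in> S0 \<longrightarrow> f x \<in> {0..n}) \<and> (x \<notin> S0 \<longrightarrow> f x = 0)}"
        using h by (force simp: supp_in_def)
    qed
    moreover have "finite {f. \<forall>x. (x \<in> S0 \<longrightarrow> f x \<in> {0..n}) \<and> (x \<notin> S0 \<longrightarrow> f x = 0)}"
      by (rule finite_set_of_finite_funs) (auto simp: S0_def)
    ultimately show ?thesis by (rule finite_subset)
  qed
  have cW: "c \<in> W" using c by (simp add: W_def)
  define Pm where "Pm = Max (total_prop S0 R0 vol ` W)"
  define pd where "pd = 1 / vol"
  have Pm: "total_prop S0 R0 vol c' \<le> Pm" if "c' \<in> W" for c'
    unfolding Pm_def using finW that by (intro Max_ge) auto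
  have pdc: "propensity S0 R0 vol c' dl = pd" if "c' \<in> W" for c'
    using that by (simp add: W_def prop_dl pd_def)
  have pd0: "0 < pd" using vol by (simp add: pd_def)
  have pdPm: "pd \<le> Pm" using pdc[OF cW] prop_le_total[OF dl_R0 vol, of c] Pm[OF cW] by simp
  have lb: "ennreal ((1 - (1 - pd/Pm)^k) / pd) \<le> tc_trunc S0 R0 vol {dl} k c" for k
  proof (rule tc_lb[OF R0_finite dl_R0 vol, where W = W])
    show "c \<in> W" by (rule cW)
    show "\<And>c. c \<in> W \<Longrightarrow> propensity S0 R0 vol c dl = pd" by (rule pdc)
    show "0 < pd" by (rule pd0)
    show "pd \<le> Pm" by (rule pdPm)
    show "\<And>c. c \<in> W \<Longrightarrow> total_prop S0 R0 vol c \<le> Pm" by (rule Pm)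
    show "\<And>c. c \<in> W \<Longrightarrow> applicable c dl" by (simp add: W_def app_dl)
    show "apply_rx c' \<alpha> \<in> W" if "c' \<in> W" "\<alpha> \<in> R0" "\<alpha> \<noteq> dl" "propensity S0 R0 vol c' \<alpha> \<noteq> 0" for c' \<alpha>
    proof -
      have ap: "applicable c' \<alpha>" using prop_applicable that(2,4) .
      show ?thesis using R0_apply[OF that(2) ap] that(1,3) by (simp add: W_def)
    qed
  qed
  define q where "q = 1 - pd / Pm"
  have Pmp: "0 < Pm" using pd0 pdPm by linarith
  have "q < 1" using pd0 Pmp by (simp add: q_def)
  then obtain k where k: "q ^ k < 1/2" using real_arch_pow_inv[of "1/2" q] by auto
  have "vol / 2 \<le> (1 - q^k) / pd" using k vol by (simp add: pd_def)
  then have "ennreal (vol / 2) \<le> ennreal ((1 - q^k) / pd)" by (rule ennreal_leI)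
  also have "\<dots> \<le> tc_trunc S0 R0 vol {dl} k c" using lb[of k] by (simp add: q_def)
  also have "\<dots> \<le> TC S0 R0 vol {dl} c" unfolding TC_def by (rule SUP_upper) simp
  finally show ?thesis .
qed




lemma pol_shape:
  assumes "\<rho> c \<subseteq> NV R0" "card (\<rho> c) \<le> 1"
  shows "\<rho> c = {} \<or> \<rho> c = {t12} \<or> \<rho> c = {eps} \<or> \<rho> c = {t21} \<or> \<rho> c = {dl}"
proof (cases "\<rho> c = {}")
  case True then show ?thesis by simp
next
  case False
  then obtain x where x: "x \<in> \<rho> c" by auto
  have fin: "finite (\<rho> c)" by (rule finite_subset[OF assms(1)]) (simp add: NV_R0)
  have "card (\<rho> c) \<le> Suc 0" using assms(2) by simp
  then have "\<forall>a\<in>\<rho> c. \<forall>b\<in>\<rho> c. a = b" using card_le_Suc0_iff_eq[OF fin] by blast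
  then have "\<rho> c = {x}" using x by auto
  moreover have "x \<in> {t12, eps, t21, dl}" using x assms(1) unfolding NV_R0 by blast
  ultimately show ?thesis by auto
qed

lemma ecs_c1: "t < 2*M \<Longrightarrow> even t \<Longrightarrow> ecs n M t = c1 n \<and> eas n M t = t12"
  by (simp add: ecs_def eas_def)
lemma ecs_c2: "t < 2*M \<Longrightarrow> odd t \<Longrightarrow> ecs n M t = c2 n \<and> eas n M t = t21"
  by (simp add: ecs_def eas_def)

lemma Pt_by_u: "t < s \<Longrightarrow> t \<le> u \<Longrightarrow> u \<le> s \<Longrightarrow> \<forall>\<alpha>\<in>Q. \<not> applicable (cs u) \<alpha> \<Longrightarrow>
   t < s \<and> (as (s - 1) \<in> Q \<or> (\<exists>u. t \<le> u \<and> u \<le> s \<and> (\<forall>\<alpha>\<in>Q. \<not> applicable (cs u) \<alpha>)))"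
  by blast
lemma Pt_by_fire: "t < s \<Longrightarrow> as (s - 1) \<in> Q \<Longrightarrow>
   t < s \<and> (as (s - 1) \<in> Q \<or> (\<exists>u. t \<le> u \<and> u \<le> s \<and> (\<forall>\<alpha>\<in>Q. \<not> applicable (cs u) \<alpha>)))"
  by blast

lemma RT_stall:
  assumes n: "3 \<le> n" and vol: "0 < vol" and rp: "runtime_policy R0 \<rho>" and cd: "\<forall>c. card (\<rho> c) \<le> 1"
    and nd1: "\<rho> (c1 n) \<noteq> {dl}" and nd2: "\<rho> (c2 n) \<noteq> {dl}"
  shows "ennreal (real (2*M) * min (span S0 R0 vol (c1 n)) (span S0 R0 vol (c2 n)))
           \<le> RT_exec S0 R0 id C0 vol \<rho> id (ecs n M) (eas n M)"
proof -
  define m where "m = min (span S0 R0 vol (c1 n)) (span S0 R0 vol (c2 n))"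
  have shape: "\<rho> c = {} \<or> \<rho> c = {t12} \<or> \<rho> c = {eps} \<or> \<rho> c = {t21} \<or> \<rho> c = {dl}" for c
    using pol_shape[of \<rho> c] rp cd by (simp add: runtime_policy_def)
  define Pt where "Pt t s = (t < s \<and> (eas n M (s - 1) \<in> \<rho> (ecs n M t) \<or>
      (\<exists>u. t \<le> u \<and> u \<le> s \<and> (\<forall>\<alpha>\<in>\<rho> (ecs n M t). \<not> applicable (ecs n M u) \<alpha>))))" for t s
  have step_ok: "Pt i (Suc i)" if "i < 2*M" for i
  proof (cases "even i")
    case True
    then have a: "ecs n M i = c1 n" "eas n M i = t12" using ecs_c1 that by auto
    have "Suc i < 2*M" using that True by presburger
    then have b: "ecs n M (Suc i) = c2 n" using ecs_c2 True by auto
    have "\<rho> (c1 n) = {} \<or> \<rho> (c1 n) = {t12} \<or> \<rho> (c1 n) = {eps} \<or> \<rho> (c1 n) = {t21}"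
      using shape[of "c1 n"] nd1 by auto
    then show ?thesis
    proof (elim disjE)
      assume h: "\<rho> (c1 n) = {}"
      show ?thesis unfolding Pt_def by (rule Pt_by_u[of i "Suc i" i]) (simp_all add: a h)
    next
      assume h: "\<rho> (c1 n) = {t12}"
      show ?thesis unfolding Pt_def by (rule Pt_by_fire) (simp_all add: a h)
    next
      assume h: "\<rho> (c1 n) = {eps}"
      have "\<not> applicable (ecs n M (Suc i)) eps" using b by (simp add: app_eps c2_def)
      then show ?thesis unfolding Pt_def by (intro Pt_by_u[of i "Suc i" "Suc i"]) (simp_all add: a h)
    next
      assume h: "\<rho> (c1 n) = {t21}"
      have "\<not> applicable (ecs n M i) t21" using a by (simp add: app_t21 c1_def)
      then show ?thesis unfolding Pt_def by (intro Pt_by_u[of i "Suc i" i]) (simp_all add: a h)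
    qed
  next
    case False
    then have a: "ecs n M i = c2 n" "eas n M i = t21" using ecs_c2 that by auto
    have "\<rho> (c2 n) = {} \<or> \<rho> (c2 n) = {t12} \<or> \<rho> (c2 n) = {eps} \<or> \<rho> (c2 n) = {t21}"
      using shape[of "c2 n"] nd2 by auto
    then show ?thesis
    proof (elim disjE)
      assume h: "\<rho> (c2 n) = {}"
      show ?thesis unfolding Pt_def by (rule Pt_by_u[of i "Suc i" i]) (simp_all add: a h)
    next
      assume h: "\<rho> (c2 n) = {t12}"
      have "\<not> applicable (ecs n M i) t12" using a by (simp add: app_t12 c2_def)
      then show ?thesis unfolding Pt_def by (intro Pt_by_u[of i "Suc i" i]) (simp_all add: a h)
    next
      assume h: "\<rho> (c2 n) = {eps}"
      have "\<not> applicable (ecs n M i) eps" using a by (simp add: app_eps c2_def)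
      then show ?thesis unfolding Pt_def by (intro Pt_by_u[of i "Suc i" i]) (simp_all add: a h)
    next
      assume h: "\<rho> (c2 n) = {t21}"
      show ?thesis unfolding Pt_def by (rule Pt_by_fire) (simp_all add: a h)
    qed
  qed
  have rnd_id: "i \<le> 2*M \<Longrightarrow> rnd \<rho> id (ecs n M) (eas n M) i = i" for i
  proof (induction i)
    case 0 then show ?case by simp
  next
    case (Suc i)
    have lt: "i < 2*M" using Suc.prems by simp
    have ih: "rnd \<rho> id (ecs n M) (eas n M) i = i" by (rule Suc.IH) (use lt in simp)
    have "rnd \<rho> id (ecs n M) (eas n M) (Suc i) = tau (ecs n M) (eas n M) i (\<rho> (ecs n M i))"
      using ih by simp
    also have "\<dots> = (LEAST s. Pt i s)" by (simp add: tau_def Pt_def)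
    also have "\<dots> = Suc i"
      by (rule Least_equality) (use step_ok[OF lt] in \<open>auto simp: Pt_def\<close>)
    finally show ?case .
  qed
  define ts where "ts = stab_step S0 R0 id C0 (ecs n M)"
  have ts: "ts = 2*M+1" using ts_exec[OF n] by (simp add: ts_def)
  define istar where "istar = (LEAST i. ts \<le> rnd \<rho> id (ecs n M) (eas n M) i)"
  have sk: "skipping_policy id" by (simp add: skipping_policy_def)
  have "ts \<le> rnd \<rho> id (ecs n M) (eas n M) ts" using rnd_ge[OF n rp sk] .
  then have Pi: "ts \<le> rnd \<rho> id (ecs n M) (eas n M) istar" unfolding istar_def by (rule LeastI)
  have big: "2*M \<le> istar"
  proof (rule ccontr)
    assume "\<not> 2*M \<le> istar"
    then have "rnd \<rho> id (ecs n M) (eas n M) istar = istar" using rnd_id by simp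
    then show False using Pi ts \<open>\<not> 2*M \<le> istar\<close> by simp
  qed
  define F where "F i = TC S0 R0 vol (\<rho> (ecs n M (id (rnd \<rho> id (ecs n M) (eas n M) i)))) (ecs n M (id (rnd \<rho> id (ecs n M) (eas n M) i)))" for i
  have Fi: "ennreal m \<le> F i" if "i < 2*M" for i
  proof -
    have "F i = TC S0 R0 vol (\<rho> (ecs n M i)) (ecs n M i)" using rnd_id[of i] that by (simp add: F_def)
    moreover have "ecs n M i = c1 n \<or> ecs n M i = c2 n" using that by (simp add: ecs_def)
    then have "m \<le> span S0 R0 vol (ecs n M i)" by (auto simp: m_def)
    then have "ennreal m \<le> ennreal (span S0 R0 vol (ecs n M i))" by (rule ennreal_leI)
    ultimately show ?thesis using TC_ge_span by (metis order.trans)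
  qed
  have m0: "0 \<le> m"
  proof -
    have "0 < total_prop S0 R0 vol (c1 n)" "0 < total_prop S0 R0 vol (c2 n)"
      using total_pos_dl[OF vol] by (auto simp: c1_def c2_def)
    then show ?thesis by (simp add: m_def span_def)
  qed
  have e1: "(\<Sum>i<2*M. ennreal m) = ennreal (\<Sum>i<2*M. m)"
    using m0 by (intro sum_ennreal) simp
  have e2: "(\<Sum>i<2*M. m) = real (2*M) * m" by simp
  have "ennreal (real (2*M) * m) = (\<Sum>i<2*M. ennreal m)"
    unfolding e1 e2 ..
  also have "\<dots> \<le> (\<Sum>i<2*M. F i)" by (rule sum_mono) (use Fi in auto)
  also have "\<dots> \<le> (\<Sum>i<istar. F i)" using big by (intro sum_mono2) auto
  also have "\<dots> = RT_exec S0 R0 id C0 vol \<rho> id (ecs n M) (eas n M)"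
    by (simp add: RT_exec_def Let_def istar_def ts_def F_def)
  finally show ?thesis by (simp add: m_def)
qed




lemma LB_policy:
  assumes n: "3 \<le> n" and vol: "0 < vol" and rp: "runtime_policy R0 \<rho>" and cd: "\<forall>c. card (\<rho> c) \<le> 1"
  shows "ennreal (vol / 2) \<le> (SUP x\<in>{(cs, as, \<sigma>). valid_fair_exec S0 R0 id C0 cs as \<and> size1 S0 (cs 0) = n \<and> skipping_policy \<sigma>}.
          (case x of (cs, as, \<sigma>) \<Rightarrow> RT_exec S0 R0 id C0 vol \<rho> \<sigma> cs as))"
proof -
  define m where "m = min (span S0 R0 vol (c1 n)) (span S0 R0 vol (c2 n))"
  have "0 < total_prop S0 R0 vol (c1 n)" "0 < total_prop S0 R0 vol (c2 n)"
    using total_pos_dl[OF vol] by (auto simp: c1_def c2_def)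
  then have m0: "0 < m" by (simp add: m_def span_def)
  define M where "M = nat \<lceil>vol / m\<rceil> + 1"
  have M1: "1 \<le> M" by (simp add: M_def)
  have "vol / m \<le> real M" unfolding M_def by linarith
  then have "vol \<le> real M * m" using m0 by (simp add: divide_le_eq)
  then have Mm: "vol / 2 \<le> real (2*M) * m" using m0 vol by simp
  have mem: "(ecs n M, eas n M, \<sigma>) \<in> {(cs, as, \<sigma>). valid_fair_exec S0 R0 id C0 cs as \<and> size1 S0 (cs 0) = n \<and> skipping_policy \<sigma>}"
    if "skipping_policy \<sigma>" for \<sigma>
    using ex_valid[OF n, of M] that by simp
  have c1f: "supp_in S0 (c1 n)" "c1 n 6 = 2" "size1 S0 (c1 n) = n" using n by (auto simp: c1_def)
  have c2f: "supp_in S0 (c2 n)" "c2 n 6 = 2" "size1 S0 (c2 n) = n" using n by (auto simp: c2_def)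
  have "\<exists>\<sigma>. skipping_policy \<sigma> \<and> ennreal (vol / 2) \<le> RT_exec S0 R0 id C0 vol \<rho> \<sigma> (ecs n M) (eas n M)"
  proof (cases "\<rho> (c1 n) = {dl}")
    case True
    have sk: "skipping_policy id" by (simp add: skipping_policy_def)
    have e: "ecs n M (id 0) = c1 n" by (simp add: ecs_def)
    have "ennreal (vol / 2) \<le> TC S0 R0 vol {dl} (c1 n)" using TC_dl_lb[OF n vol c1f] .
    also have "\<dots> \<le> RT_exec S0 R0 id C0 vol \<rho> id (ecs n M) (eas n M)"
      using RT_ge_first[OF n rp sk, of vol M] e True by simp
    finally show ?thesis using sk by blast
  next
    case False
    show ?thesis
    proof (cases "\<rho> (c2 n) = {dl}")
      case True
      define \<sigma> where "\<sigma> = (\<lambda>t::nat. if t = 0 then 1 else t)"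
      have sk: "skipping_policy \<sigma>" by (simp add: skipping_policy_def \<sigma>_def)
      have "1 < 2*M" using M1 by simp
      then have e: "ecs n M (\<sigma> 0) = c2 n" by (simp add: ecs_def \<sigma>_def)
      have "ennreal (vol / 2) \<le> TC S0 R0 vol {dl} (c2 n)" using TC_dl_lb[OF n vol c2f] .
      also have "\<dots> \<le> RT_exec S0 R0 id C0 vol \<rho> \<sigma> (ecs n M) (eas n M)"
        using RT_ge_first[OF n rp sk, of vol M] e True by simp
      finally show ?thesis using sk by blast
    next
      case False2: False
      have sk: "skipping_policy id" by (simp add: skipping_policy_def)
      have "ennreal (vol / 2) \<le> ennreal (real (2*M) * m)" using Mm by (rule ennreal_leI)
      also have "\<dots> \<le> RT_exec S0 R0 id C0 vol \<rho> id (ecs n M) (eas n M)"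
        using RT_stall[OF n vol rp cd False False2, of M] by (simp add: m_def)
      finally show ?thesis using sk by blast
    qed
  qed
  then obtain \<sigma> where s: "skipping_policy \<sigma>" "ennreal (vol / 2) \<le> RT_exec S0 R0 id C0 vol \<rho> \<sigma> (ecs n M) (eas n M)"
    by blast
  show ?thesis
    by (rule SUP_upper2[OF mem[OF s(1)]]) (simp add: s(2))
qed

theorem proposition7p2:
  shows "\<exists>S R U \<mu> C. crn_protocol S R U \<mu> C \<and> stably_correct S R \<mu> C \<and>
     (\<forall>\<phi>::nat \<Rightarrow> real. (\<forall>n. 0 < \<phi> n) \<and> \<phi> \<in> \<Theta>(\<lambda>n. real n) \<longrightarrow>
        (\<exists>K::real. \<exists>N. \<forall>n\<ge>N. RT_stab S R \<mu> C \<phi> (\<lambda>_. True) n \<le> ennreal (K * ln (real n))) \<and>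
        (\<exists>k::real. 0 < k \<and> (\<exists>N. \<forall>n\<ge>N.
            ennreal (k * real n) \<le> RT_stab S R \<mu> C \<phi> (\<lambda>\<rho>. \<forall>c. card (\<rho> c) \<le> 1) n)))"
proof -
  have main: "(\<exists>K::real. \<exists>N. \<forall>n\<ge>N. RT_stab S0 R0 id C0 \<phi> (\<lambda>_. True) n \<le> ennreal (K * ln (real n))) \<and>
        (\<exists>k::real. 0 < k \<and> (\<exists>N. \<forall>n\<ge>N.
            ennreal (k * real n) \<le> RT_stab S0 R0 id C0 \<phi> (\<lambda>\<rho>. \<forall>c. card (\<rho> c) \<le> 1) n))"
    if a: "(\<forall>n. 0 < \<phi> n) \<and> \<phi> \<in> \<Theta>(\<lambda>n. real n)" for \<phi> :: "nat \<Rightarrow> real"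
  proof (rule conjI)
  show "\<exists>K::real. \<exists>N. \<forall>n\<ge>N. RT_stab S0 R0 id C0 \<phi> (\<lambda>_. True) n \<le> ennreal (K * ln (real n))"
  proof (intro exI[of _ "4::real"] exI[of _ "3::nat"] allI impI)
    fix n :: nat assume n: "3 \<le> n"
    have "exp 1 \<le> real n" using exp_le n by linarith
    then have "1 \<le> ln (real n)" using n by (subst ln_ge_iff) auto
    then have "ennreal 4 \<le> ennreal (4 * ln (real n))" by (intro ennreal_leI) simp
    then have "4 \<le> ennreal (4 * ln (real n))" by simp
    then show "RT_stab S0 R0 id C0 \<phi> (\<lambda>_. True) n \<le> ennreal (4 * ln (real n))"
      using RT_stab_up[of \<phi> n] a by (metis order.trans)
  qed
  have "\<phi> \<in> \<Omega>(\<lambda>n. real n)" using a by blast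
  then obtain c where c: "0 < c" "\<forall>\<^sub>F x in at_top. c * norm (real x) \<le> norm (\<phi> x)"
    by (elim landau_omega.bigE)
  then obtain N0 where N0: "\<And>n. n \<ge> N0 \<Longrightarrow> c * norm (real n) \<le> norm (\<phi> n)"
    by (auto simp: eventually_at_top_linorder)
  show "\<exists>k::real. 0 < k \<and> (\<exists>N. \<forall>n\<ge>N.
            ennreal (k * real n) \<le> RT_stab S0 R0 id C0 \<phi> (\<lambda>\<rho>. \<forall>c. card (\<rho> c) \<le> 1) n)"
  proof (intro exI[of _ "c / 2"] conjI exI[of _ "max 3 N0"] allI impI)
    show "0 < c / 2" using c by simp
    fix n :: nat assume n: "max 3 N0 \<le> n"
    have "0 < \<phi> n" using a by blast
    then have "c * real n \<le> \<phi> n" using N0[of n] n by auto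
    then have "ennreal (c / 2 * real n) \<le> ennreal (\<phi> n / 2)" by (intro ennreal_leI) simp
    also have "\<dots> \<le> RT_stab S0 R0 id C0 \<phi> (\<lambda>\<rho>. \<forall>c. card (\<rho> c) \<le> 1) n"
      unfolding RT_stab_def
    proof (rule INF_greatest)
      fix \<rho> assume "\<rho> \<in> {\<rho>. runtime_policy R0 \<rho> \<and> (\<forall>c. card (\<rho> c) \<le> 1)}"
      then show "ennreal (\<phi> n / 2) \<le> (SUP x\<in>{(cs, as, \<sigma>). valid_fair_exec S0 R0 id C0 cs as \<and> size1 S0 (cs 0) = n \<and> skipping_policy \<sigma>}.
          (case x of (cs, as, \<sigma>) \<Rightarrow> RT_exec S0 R0 id C0 (\<phi> n) \<rho> \<sigma> cs as))"
        using LB_policy[of n "\<phi> n" \<rho>] n a by auto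
    qed
    finally show "ennreal (c / 2 * real n) \<le> RT_stab S0 R0 id C0 \<phi> (\<lambda>\<rho>. \<forall>c. card (\<rho> c) \<le> 1) n" .
  qed
  qed
  show ?thesis
    apply (rule exI[of _ S0], rule exI[of _ R0], rule exI[of _ S0], rule exI[of _ id], rule exI[of _ C0])
    apply (intro conjI protocol stably allI impI)
    using main by auto
qed


end
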